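(* Let $\mathcal{C}$ be a permutation class containing only finitely many simple permutations, and let $k$ be the length of the longest simple permutations in $\mathcal{C}$. Then every basis element of the substitution closure $\langle\mathcal{C}\rangle$ has length at most $k+2$.
   Context: A permutation $\pi$ contains $\sigma$ ($\sigma\le\pi$) if some subsequence of $\pi$ has the same relative order as $\sigma$. A permutation class is a downset under $\le$; its basis is the set of $\le$-minimal permutations not in the class. An interval of a permutation is a set of contiguous positions whose values form a contiguous set; a permutation of length $n$ is simple if its only intervals have sizes $0,1,n$. The inflation $\sigma[\alpha_1,\dots,\alpha_m]$ (for $\sigma$ of length $m$ and nonempty $\alpha_i$) replaces each entry $\sigma(i)$ by an interval order isomorphic to $\alpha_i$, arranged relative to one another as in $\sigma$. A class is substitution-closed if it contains $\sigma[\alpha_1,\dots,\alpha_m]$ whenever it contains $\sigma,\alpha_1,\dots,\alpha_m$; the substitution closure $\langle\mathcal{C}\rangle$ is the smallest substitution-closed class containing $\mathcal{C}$. *)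

theory Defs
  imports Main
begin

text \<open>Permutations of length n are lists of naturals that are permutations of [0..<n]
  (one-line notation, 0-based values).\<close>
definition is_perm :: "nat list \<Rightarrow> bool" where
  "is_perm p \<longleftrightarrow> distinct p \<and> set p = {0..<length p}"

definition contains :: "nat list \<Rightarrow> nat list \<Rightarrow> bool" where
  "contains \<pi> \<sigma> \<longleftrightarrow>
     (\<exists>f. strict_mono_on {..<length \<sigma>} f \<and> (\<forall>i<length \<sigma>. f i < length \<pi>) \<and>
          (\<forall>i<length \<sigma>. \<forall>j<length \<sigma>. \<sigma>!i < \<sigma>!j \<longleftrightarrow> \<pi>!(f i) < \<pi>!(f j)))"

definition perm_class :: "nat list set \<Rightarrow> bool" where
  "perm_class C \<longleftrightarrow> (\<forall>\<pi>\<in>C. is_perm \<pi>) \<and>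
     (\<forall>\<pi>\<in>C. \<forall>\<sigma>. is_perm \<sigma> \<and> contains \<pi> \<sigma> \<longrightarrow> \<sigma> \<in> C)"

definition basis :: "nat list set \<Rightarrow> nat list set" where
  "basis C = {\<beta>. is_perm \<beta> \<and> \<beta> \<notin> C \<and>
     (\<forall>\<sigma>. is_perm \<sigma> \<and> contains \<beta> \<sigma> \<and> \<sigma> \<noteq> \<beta> \<longrightarrow> \<sigma> \<in> C)}"

definition is_interval :: "nat list \<Rightarrow> nat set \<Rightarrow> bool" where
  "is_interval \<pi> I \<longleftrightarrow>
     (\<exists>a b. I = {a..<b} \<and> b \<le> length \<pi> \<and> (\<exists>c. (\<lambda>i. \<pi>!i) ` I = {c..<c + card I}))"

definition simple :: "nat list \<Rightarrow> bool" where
  "simple \<pi> \<longleftrightarrow> (\<forall>I. is_interval \<pi> I \<longrightarrow> card I = 0 \<or> card I = 1 \<or> card I = length \<pi>)"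

text \<open>Inflation \<sigma>[\<alpha>_1,...,\<alpha>_m]: block i is \<alpha>_i shifted by the total length of the
  blocks whose \<sigma>-value is smaller than \<sigma>(i).\<close>
definition inflate :: "nat list \<Rightarrow> nat list list \<Rightarrow> nat list" where
  "inflate \<sigma> \<alpha>s = concat (map (\<lambda>i. map (\<lambda>x. x +
       sum_list (map (\<lambda>l. length (\<alpha>s!l)) (filter (\<lambda>l. \<sigma>!l < \<sigma>!i) [0..<length \<sigma>])))
     (\<alpha>s!i)) [0..<length \<sigma>])"

definition subst_closed :: "nat list set \<Rightarrow> bool" where
  "subst_closed C \<longleftrightarrow> (\<forall>\<sigma>\<in>C. \<forall>\<alpha>s. length \<alpha>s = length \<sigma> \<and> (\<forall>\<alpha>\<in>set \<alpha>s. \<alpha> \<in> C \<and> \<alpha> \<noteq> [])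
       \<longrightarrow> inflate \<sigma> \<alpha>s \<in> C)"

definition subst_closure :: "nat list set \<Rightarrow> nat list set" where
  "subst_closure C = \<Inter>{D. perm_class D \<and> subst_closed D \<and> C \<subseteq> D}"

end

theory Submission
  imports Defs
begin

definition sep :: "(nat \<Rightarrow> nat) \<Rightarrow> nat \<Rightarrow> nat set \<Rightarrow> bool" where
  "sep p z M \<longleftrightarrow> (\<exists>a\<in>M. \<exists>b\<in>M. (a < z \<and> z < b) \<or> (p a < p z \<and> p z < p b))"

definition smod :: "(nat \<Rightarrow> nat) \<Rightarrow> nat set \<Rightarrow> nat set \<Rightarrow> bool" where
  "smod p S M \<longleftrightarrow> M \<subseteq> S \<and> (\<forall>z\<in>S - M. \<not> sep p z M)"

definition ssimple :: "(nat \<Rightarrow> nat) \<Rightarrow> nat set \<Rightarrow> bool" where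
  "ssimple p S \<longleftrightarrow> (\<forall>M. smod p S M \<longrightarrow> card M \<le> 1 \<or> M = S)"

lemma sep_mono: "sep p z M \<Longrightarrow> M \<subseteq> N \<Longrightarrow> sep p z N"
  unfolding sep_def by blast

lemma smod_restrict: "smod p S M \<Longrightarrow> X \<subseteq> S \<Longrightarrow> smod p X (M \<inter> X)"
  unfolding smod_def by (meson Diff_iff Int_iff inf_le1 sep_mono subsetD inf_le2)

lemma sep_union:
  assumes "u \<in> A" "w \<notin> A" "p w \<noteq> p u" "\<forall>t\<in>A. \<not> sep p w {u,t}"
  shows "\<not> sep p w A"
proof
  assume "sep p w A"
  then obtain a b where ab: "a \<in> A" "b \<in> A" "(a < w \<and> w < b) \<or> (p a < p w \<and> p w < p b)"
    unfolding sep_def by blast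
  have "w \<noteq> u" using assms by auto
  from ab(3) show False
  proof
    assume h: "a < w \<and> w < b"
    show False
    proof (cases "w < u")
      case True
      then have "sep p w {u,a}" using h unfolding sep_def by auto
      then show False using assms ab by auto
    next
      case False
      then have "u < w" using \<open>w \<noteq> u\<close> by auto
      then have "sep p w {u,b}" using h unfolding sep_def by auto
      then show False using assms ab by auto
    qed
  next
    assume h: "p a < p w \<and> p w < p b"
    show False
    proof (cases "p w < p u")
      case True
      then have "sep p w {u,a}" using h unfolding sep_def by auto
      then show False using assms ab by auto
    next
      case False
      then have "p u < p w" using assms(3) by auto
      then have "sep p w {u,b}" using h unfolding sep_def by auto
      then show False using assms ab by auto
    qed
  qed
qed

lemma sep_pair_iff: "sep p z {x,y} \<longleftrightarrow> (x < z \<and> z < y) \<or> (y < z \<and> z < x) \<or> (p x < p z \<and> p z < p y) \<or> (p y < p z \<and> p z < p x)"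
  unfolding sep_def by auto

lemma smod_sepD: "smod p S M \<Longrightarrow> z \<in> S \<Longrightarrow> z \<notin> M \<Longrightarrow> \<not> sep p z M"
  unfolding smod_def by auto

lemma smod_in: "smod p S M \<Longrightarrow> z \<in> S \<Longrightarrow> sep p z M \<Longrightarrow> z \<in> M"
  unfolding smod_def by auto

lemma ssimple_small: "card S \<le> 2 \<Longrightarrow> finite S \<Longrightarrow> ssimple p S"
  unfolding ssimple_def smod_def
proof (intro allI impI)
  fix M assume "card S \<le> 2" "finite S" "M \<subseteq> S \<and> (\<forall>z\<in>S - M. \<not> sep p z M)"
  then show "card M \<le> 1 \<or> M = S"
  proof (cases "card M \<le> 1")
    case False
    then have "card M \<ge> card S" using \<open>card S \<le> 2\<close> by linarith
    then show ?thesis using card_seteq[of S M] \<open>finite S\<close> \<open>M \<subseteq> S \<and> _\<close> by blast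
  qed simp
qed

lemma card2_sub: assumes "M \<subseteq> {a,b}" "card M \<ge> 2" shows "M = {a,b}"
proof -
  have "card {a,b} \<le> 2" by (cases "a = b") auto
  moreover have "finite {a,b}" by simp
  ultimately show ?thesis using card_seteq[of "{a,b}" M] assms by linarith
qed

lemma sep_single: "\<not> sep p z {u}"
  unfolding sep_def by auto

lemma geom:
  assumes "u \<noteq> v" "u \<noteq> z" "u \<noteq> w" "v \<noteq> z" "v \<noteq> w" "z \<noteq> w"
    "p u \<noteq> p v" "p u \<noteq> p z" "p u \<noteq> p w" "p v \<noteq> p z" "p v \<noteq> p w" "p z \<noteq> p w"
    "sep p w {u,z}" "\<not> sep p v {u,z}" "\<not> sep p u {v,w}" "\<not> sep p z {v,w}"
  shows False
proof -
  have A: "(u < w \<and> w < z) \<or> (z < w \<and> w < u) \<or> (p u < p w \<and> p w < p z) \<or> (p z < p w \<and> p w < p u)"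
    using assms(13) unfolding sep_pair_iff .
  have B: "\<not> ((u < v \<and> v < z) \<or> (z < v \<and> v < u))" "\<not> ((p u < p v \<and> p v < p z) \<or> (p z < p v \<and> p v < p u))"
    using assms(14) unfolding sep_pair_iff by auto
  have C: "\<not> ((v < u \<and> u < w) \<or> (w < u \<and> u < v))" "\<not> ((p v < p u \<and> p u < p w) \<or> (p w < p u \<and> p u < p v))"
    using assms(15) unfolding sep_pair_iff by auto
  have D: "\<not> ((v < z \<and> z < w) \<or> (w < z \<and> z < v))" "\<not> ((p v < p z \<and> p z < p w) \<or> (p w < p z \<and> p z < p v))"
    using assms(16) unfolding sep_pair_iff by auto
  from A show False
  proof (elim disjE)
    assume "u < w \<and> w < z" then show False using B(1) C(1) D(1) assms(1,4) by linarith
  next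
    assume "z < w \<and> w < u" then show False using B(1) C(1) D(1) assms(1,4) by linarith
  next
    assume "p u < p w \<and> p w < p z" then show False using B(2) C(2) D(2) assms(7,10) by linarith
  next
    assume "p z < p w \<and> p w < p u" then show False using B(2) C(2) D(2) assms(7,10) by linarith
  qed
qed

lemma Xu_sep:
  assumes sX: "ssimple p X" and fin: "finite X" and c3: "card X \<ge> 3" and u: "u \<in> X" and z: "z \<notin> X"
    and inj: "inj_on p (insert z X)" and m: "smod p (insert z X) {u,z}"
  shows "sep p z X"
proof (rule ccontr)
  assume nz: "\<not> sep p z X"
  have "smod p X (X - {u})"
    unfolding smod_def
  proof (intro conjI ballI)
    fix y assume "y \<in> X - (X - {u})"
    then have y: "y = u" by auto
    show "\<not> sep p y (X - {u})"
    proof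
      assume "sep p y (X - {u})"
      then obtain a b where ab: "a \<in> X" "b \<in> X" "a \<noteq> u" "b \<noteq> u"
          "(a < u \<and> u < b) \<or> (p a < p u \<and> p u < p b)"
        unfolding sep_def y by blast
      have nsa: "\<not> sep p a {u,z}" "\<not> sep p b {u,z}"
        using m ab z unfolding smod_def by auto
      have "a \<noteq> z" "b \<noteq> z" using ab z by auto
      moreover have "p a \<noteq> p z" "p b \<noteq> p z"
        using inj ab z \<open>a \<noteq> z\<close> \<open>b \<noteq> z\<close> unfolding inj_on_def by auto
      moreover have "\<not> ((a < z \<and> z < b) \<or> (p a < p z \<and> p z < p b))"
        using nz ab unfolding sep_def by blast
      moreover have "\<not> ((u < a \<and> a < z) \<or> (z < a \<and> a < u))" "\<not> ((p u < p a \<and> p a < p z) \<or> (p z < p a \<and> p a < p u))"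
        "\<not> ((u < b \<and> b < z) \<or> (z < b \<and> b < u))" "\<not> ((p u < p b \<and> p b < p z) \<or> (p z < p b \<and> p b < p u))"
        using nsa unfolding sep_pair_iff by auto
      ultimately show False using ab(5) by linarith
    qed
  qed auto
  then have "card (X - {u}) \<le> 1 \<or> X - {u} = X" using sX unfolding ssimple_def by blast
  then show False using c3 u fin by auto
qed

lemma growth:
  assumes fin: "finite S" and inj: "inj_on p S" and sS: "ssimple p S"
    and XS: "X \<subseteq> S" "X \<noteq> S" and sX: "ssimple p X" and c3: "card X \<ge> 3"
  shows "\<exists>Y. X \<subset> Y \<and> Y \<subseteq> S \<and> card Y \<le> card X + 2 \<and> ssimple p Y"
proof (cases "\<exists>z\<in>S-X. ssimple p (insert z X)")
  case True
  then obtain z where "z \<in> S - X" "ssimple p (insert z X)" by blast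
  moreover have "finite X" using fin XS finite_subset by blast
  ultimately show ?thesis using XS by (intro exI[of _ "insert z X"]) auto
next
  case False
  have finX: "finite X" using fin XS finite_subset by blast
  have "\<not> smod p S X" using sS c3 XS unfolding ssimple_def by auto
  then obtain z0 where z0: "z0 \<in> S" "z0 \<notin> X" "sep p z0 X" using XS unfolding smod_def by auto
  have "\<not> ssimple p (insert z0 X)" using False z0 by auto
  then obtain M where M: "smod p (insert z0 X) M" "card M > 1" "M \<noteq> insert z0 X"
    unfolding ssimple_def by (meson not_le)
  have MX: "smod p X (M \<inter> X)" using smod_restrict[OF M(1)] by auto
  have Msub: "M \<subseteq> insert z0 X" using M(1) unfolding smod_def by auto
  have "\<exists>u\<in>X. M = {u, z0}"
  proof (cases "M \<inter> X = X")
    case True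
    then have "z0 \<notin> M" using Msub M(3) by auto
    then have "M = X" using True Msub by auto
    then show ?thesis using M(1) z0 unfolding smod_def by auto
  next
    case False
    then have c1: "card (M \<inter> X) \<le> 1" using MX sX unfolding ssimple_def by auto
    have finM: "finite M" using Msub finX finite_subset by blast
    have "z0 \<in> M"
    proof (rule ccontr)
      assume "z0 \<notin> M" then have "M \<inter> X = M" using Msub by auto
      then show False using c1 M(2) by auto
    qed
    then have "M = insert z0 (M \<inter> X)" using Msub by auto
    moreover have "card (insert z0 (M \<inter> X)) = Suc (card (M \<inter> X))" using finX z0(2) by simp
    ultimately have "card M = card (M \<inter> X) + 1" by simp
    then have "card (M \<inter> X) = 1" using c1 M(2) by auto
    then obtain u where "M \<inter> X = {u}" using card_1_singletonE by blast
    then show ?thesis using \<open>M = insert z0 (M \<inter> X)\<close> by auto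
  qed
  then obtain u where u: "u \<in> X" "smod p (insert z0 X) {u, z0}" using M(1) by auto
  define A where "A = insert u {t\<in>S-X. smod p (insert t X) {u,t}}"
  have AS: "A \<subseteq> S" using u XS unfolding A_def by auto
  have z0A: "z0 \<in> A" using u z0 unfolding A_def by auto
  have finA: "finite A" using AS fin finite_subset by blast
  have uz0: "u \<noteq> z0" using u z0 by auto
  have cA: "card A > 1"
  proof -
    have "{u,z0} \<subseteq> A" using z0A unfolding A_def by auto
    then have "card {u,z0} \<le> card A" using finA card_mono by blast
    then show ?thesis using uz0 by auto
  qed
  obtain v where v: "v \<in> X" "v \<noteq> u"
  proof -
    have "card (X - {u}) \<ge> 2" using c3 u finX by auto
    then have "X - {u} \<noteq> {}" by (metis card.empty not_numeral_le_zero)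
    then show ?thesis using that by auto
  qed
  have "v \<notin> A" using v unfolding A_def by auto
  then have "A \<noteq> S" using v XS by auto
  then have "\<not> smod p S A" using sS cA unfolding ssimple_def by auto
  then obtain w where w: "w \<in> S" "w \<notin> A" "sep p w A" using AS unfolding smod_def by auto
  have wu: "w \<noteq> u" using w unfolding A_def by auto
  have pwu: "p w \<noteq> p u" using inj w(1) u XS wu unfolding inj_on_def by auto
  have "\<exists>t\<in>A. sep p w {u,t}" using sep_union[of u A w p] w pwu unfolding A_def by blast
  then obtain z where zA: "z \<in> A" and wz: "sep p w {u,z}" by blast
  have zu: "z \<noteq> u" using wz sep_single[of p w u] by auto
  then have z: "z \<in> S" "z \<notin> X" "smod p (insert z X) {u,z}" using zA unfolding A_def by auto
  have wX: "w \<notin> X"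
  proof
    assume wX: "w \<in> X"
    have "\<forall>t\<in>A. \<not> sep p w {u,t}"
    proof
      fix t assume t: "t \<in> A"
      show "\<not> sep p w {u,t}"
      proof (cases "t = u")
        case True then show ?thesis using sep_single[of p w u] by auto
      next
        case False
        then have "smod p (insert t X) {u,t}" "t \<notin> X" using t unfolding A_def by auto
        then show ?thesis using wX wu unfolding smod_def by auto
      qed
    qed
    then show False using sep_union[of u A w p] w pwu unfolding A_def by blast
  qed
  have injzX: "inj_on p (insert z X)" using inj z XS by (meson inj_on_subset insert_subset)
  have zsX: "sep p z X" using Xu_sep[OF sX finX c3 u(1) z(2) injzX z(3)] .
  have wz': "w \<noteq> z" using w zA by auto
  define Y where "Y = insert w (insert z X)"
  have YS: "Y \<subseteq> S" using w z XS unfolding Y_def by auto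
  have cY: "card Y = card X + 2" using finX wX z wz' unfolding Y_def by auto
  have nXu: "\<And>x. x \<in> X \<Longrightarrow> x \<noteq> u \<Longrightarrow> \<not> sep p x {u,z}"
    using z(3) z(2) unfolding smod_def by auto
  have wnA: "\<not> smod p (insert w X) {u,w}"
    using w wX u XS unfolding A_def by auto
  have injY: "inj_on p Y" using inj YS inj_on_subset by blast
  have sY: "ssimple p Y"
    unfolding ssimple_def
  proof (intro allI impI)
    fix M assume MY: "smod p Y M"
    show "card M \<le> 1 \<or> M = Y"
    proof (rule ccontr)
      assume nM: "\<not> (card M \<le> 1 \<or> M = Y)"
      have MsubY: "M \<subseteq> Y" using MY unfolding smod_def by auto
      have finM: "finite M" using MsubY finX unfolding Y_def using finite_subset by blast
      have nsepM: "\<And>x. x \<in> Y \<Longrightarrow> x \<notin> M \<Longrightarrow> \<not> sep p x M" using MY unfolding smod_def by auto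
      have "smod p X (M \<inter> X)" using smod_restrict[OF MY] unfolding Y_def by auto
      then have "card (M \<inter> X) \<le> 1 \<or> M \<inter> X = X" using sX unfolding ssimple_def by auto
      then show False
      proof
        assume MXX: "M \<inter> X = X"
        have "z \<in> M"
        proof (rule ccontr)
          assume "z \<notin> M"
          moreover have "sep p z M" using sep_mono[OF zsX] MXX by auto
          ultimately show False using nsepM unfolding Y_def by auto
        qed
        moreover have "w \<in> M"
        proof (rule ccontr)
          assume "w \<notin> M"
          moreover have "sep p w M" using sep_mono[OF wz] \<open>z \<in> M\<close> MXX u by auto
          ultimately show False using nsepM unfolding Y_def by auto
        qed
        ultimately have "M = Y" using MXX MsubY unfolding Y_def by auto
        then show False using nM by auto
      next
        assume c1: "card (M \<inter> X) \<le> 1"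
        show False
        proof (cases "M \<inter> X = {}")
          case True
          then have "M \<subseteq> {z,w}" using MsubY unfolding Y_def by auto
          moreover have "card M \<ge> 2" using nM by auto
          ultimately have Mzw: "M = {z,w}"
            by (rule card2_sub)
          have "smod p (insert w X) {u,w}"
            unfolding smod_def
          proof (intro conjI ballI)
            fix x assume x: "x \<in> insert w X - {u,w}"
            then have x': "x \<in> X" "x \<noteq> u" "x \<notin> {z,u,w}" using z by auto
            have "\<not> sep p x {z,w}" using nsepM[of x] x' Mzw unfolding Y_def by auto
            moreover have "\<not> sep p x {u,z}" using nXu x' by auto
            moreover have "x \<noteq> z" using x' by auto
            moreover have "p x \<noteq> p z" using inj_on_contraD[OF injY \<open>x \<noteq> z\<close>] x' unfolding Y_def by auto
            moreover have "{z,u} = {u,z}" by auto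
            ultimately have "\<forall>t\<in>{z,u,w}. \<not> sep p x {z,t}" using sep_single[of p x z] by auto
            then have "\<not> sep p x {z,u,w}"
              using sep_union[of z "{z,u,w}" x p] x' \<open>p x \<noteq> p z\<close> by blast
            then show "\<not> sep p x {u,w}" using sep_mono[of p x "{u,w}" "{z,u,w}"] by auto
          qed (use u in auto)
          then show False using wnA by auto
        next
          case False
          then obtain v' where v': "M \<inter> X = {v'}" using c1
          proof -
            have "card (M \<inter> X) \<noteq> 0" using False finX by simp
            then have "card (M \<inter> X) = 1" using c1 by linarith
            then show ?thesis using card_1_singletonE that by blast
          qed
          then have v'X: "v' \<in> X" "v' \<in> M" by auto
          show False
          proof (cases "v' = u")
            case True
            show False
            proof (cases "w \<in> M")
              case True
              have "smod p (insert w X) {u,w}"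
                unfolding smod_def
              proof (intro conjI ballI)
                fix x assume x: "x \<in> insert w X - {u,w}"
                then have x': "x \<in> X" "x \<noteq> u" using z by auto
                then have "x \<notin> M" using v' \<open>v' = u\<close> by auto
                then have "\<not> sep p x M" using nsepM x' unfolding Y_def by auto
                then show "\<not> sep p x {u,w}" using sep_mono[of p x "{u,w}" M] True v'X \<open>v' = u\<close> by auto
              qed (use u in auto)
              then show False using wnA by auto
            next
              case False
              then have "M \<subseteq> {u,z}" using MsubY v' \<open>v' = u\<close> unfolding Y_def by blast
              moreover have "card M \<ge> 2" using nM by auto
              ultimately have "M = {u,z}"
                by (rule card2_sub)
              then have "sep p w M" using wz by auto
              then show False using nsepM[of w] False unfolding Y_def by auto
            qed
          next
            case False
            have uM: "u \<notin> M" using v' False u by auto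
            show False
            proof (cases "z \<in> M")
              case True
              have "smod p X {u,v'}"
                unfolding smod_def
              proof (intro conjI ballI)
                fix x assume x: "x \<in> X - {u,v'}"
                then have "x \<notin> M" using v' by auto
                then have "\<not> sep p x M" using nsepM x unfolding Y_def by auto
                then have "\<not> sep p x {z,v'}" using sep_mono[of p x "{z,v'}" M] True v'X by auto
                moreover have "\<not> sep p x {z,u}"
                proof -
                  have "{z,u} = {u,z}" by auto
                  moreover have "\<not> sep p x {u,z}" using nXu[of x] x by auto
                  ultimately show ?thesis by simp
                qed
                moreover have "x \<noteq> z" using x z by auto
                moreover have "p x \<noteq> p z" using inj_on_contraD[OF injY \<open>x \<noteq> z\<close>] x unfolding Y_def by auto
                ultimately have "\<forall>t\<in>{z,u,v'}. \<not> sep p x {z,t}" using sep_single[of p x z] by auto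
                then have "\<not> sep p x {z,u,v'}"
                  using sep_union[of z "{z,u,v'}" x p] x \<open>p x \<noteq> p z\<close> \<open>x \<noteq> z\<close> by blast
                then show "\<not> sep p x {u,v'}" using sep_mono[of p x "{u,v'}" "{z,u,v'}"] by auto
              qed (use u v'X in auto)
              then have "card {u,v'} \<le> 1 \<or> {u,v'} = X" using sX unfolding ssimple_def by blast
              moreover have "card {u,v'} = 2" using False by auto
              ultimately have "card X = 2" by auto
              then show False using c3 by linarith
            next
              case False
              then have "M \<subseteq> {v',w}" using MsubY v' unfolding Y_def by blast
              moreover have "card M \<ge> 2" using nM by auto
              ultimately have Mvw: "M = {v',w}"
                by (rule card2_sub)
              have s1: "\<not> sep p u {v',w}" using nsepM[of u] uM Mvw u unfolding Y_def by auto
              have s2: "\<not> sep p z {v',w}" using nsepM[of z] False Mvw unfolding Y_def by auto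
              have s3: "\<not> sep p v' {u,z}" using nXu[of v'] v'X \<open>v' \<noteq> u\<close> by auto
              have inY: "u \<in> Y" "v' \<in> Y" "z \<in> Y" "w \<in> Y" using u v'X unfolding Y_def by auto
              have d: "u \<noteq> v'" "u \<noteq> z" "u \<noteq> w" "v' \<noteq> z" "v' \<noteq> w" "z \<noteq> w"
                using v'X wX wu zu wz' z \<open>v' \<noteq> u\<close> by auto
              have pd: "p u \<noteq> p v'" "p u \<noteq> p z" "p u \<noteq> p w" "p v' \<noteq> p z" "p v' \<noteq> p w" "p z \<noteq> p w"
                using inj_on_contraD[OF injY d(1) inY(1,2)] inj_on_contraD[OF injY d(2) inY(1,3)]
                  inj_on_contraD[OF injY d(3) inY(1,4)] inj_on_contraD[OF injY d(4) inY(2,3)]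
                  inj_on_contraD[OF injY d(5) inY(2,4)] inj_on_contraD[OF injY d(6) inY(3,4)] by auto
              show False using geom[OF d pd wz s3 s1 s2] .
            qed
          qed
        qed
      qed
    qed
  qed
  show ?thesis using YS cY sY finX wX z unfolding Y_def by (intro exI[of _ Y]) (auto simp: Y_def)
qed

lemma smod_in_pos: "smod p S M \<Longrightarrow> z \<in> S \<Longrightarrow> x \<in> M \<Longrightarrow> y \<in> M \<Longrightarrow> x < z \<Longrightarrow> z < y \<Longrightarrow> z \<in> M"
  unfolding smod_def sep_def by blast

lemma smod_in_val: "smod p S M \<Longrightarrow> z \<in> S \<Longrightarrow> x \<in> M \<Longrightarrow> y \<in> M \<Longrightarrow> p x < p z \<Longrightarrow> p z < p y \<Longrightarrow> z \<in> M"
  unfolding smod_def sep_def by blast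

lemma two_elems: assumes "finite M" "card M \<ge> 2" obtains x y where "x \<in> M" "y \<in> M" "x \<noteq> y"
proof -
  have "\<not> card M \<le> Suc 0" using assms by auto
  then show ?thesis using card_le_Suc0_iff_eq[OF assms(1)] that by blast
qed

lemma simple4_2413:
  assumes o: "a < b" "b < c" "c < d" "p c < p a" "p a < p d" "p d < p b"
  shows "ssimple p {a,b,c,d}"
  unfolding ssimple_def
proof (intro allI impI)
  fix M assume M: "smod p {a,b,c,d} M"
  show "card M \<le> 1 \<or> M = {a,b,c,d}"
  proof (rule ccontr)
    assume nc: "\<not> (card M \<le> 1 \<or> M = {a,b,c,d})"
    have Ms: "M \<subseteq> {a,b,c,d}" using M unfolding smod_def by auto
    then have fM: "finite M" using finite_subset by blast
    obtain x y where xy: "x \<in> M" "y \<in> M" "x \<noteq> y" using two_elems[OF fM] nc by auto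
    have h1: "a \<in> M \<Longrightarrow> c \<in> M \<Longrightarrow> b \<in> M" using smod_in_pos[OF M, of b a c] o by auto
    have h2: "b \<in> M \<Longrightarrow> d \<in> M \<Longrightarrow> c \<in> M" using smod_in_pos[OF M, of c b d] o by auto
    have h3: "a \<in> M \<Longrightarrow> d \<in> M \<Longrightarrow> b \<in> M" using smod_in_pos[OF M, of b a d] o by auto
    have h4: "c \<in> M \<Longrightarrow> d \<in> M \<Longrightarrow> a \<in> M" using smod_in_val[OF M, of a c d] o by auto
    have h5: "a \<in> M \<Longrightarrow> b \<in> M \<Longrightarrow> d \<in> M" using smod_in_val[OF M, of d a b] o by auto
    have h6: "c \<in> M \<Longrightarrow> b \<in> M \<Longrightarrow> a \<in> M" using smod_in_val[OF M, of a c b] o by auto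
    have "a \<in> M \<and> b \<in> M \<and> c \<in> M \<and> d \<in> M"
      using xy Ms h1 h2 h3 h4 h5 h6 by blast
    then have "M = {a,b,c,d}" using Ms by auto
    then show False using nc by auto
  qed
qed

lemma simple4_3142:
  assumes o: "a < b" "b < c" "c < d" "p b < p d" "p d < p a" "p a < p c"
  shows "ssimple p {a,b,c,d}"
  unfolding ssimple_def
proof (intro allI impI)
  fix M assume M: "smod p {a,b,c,d} M"
  show "card M \<le> 1 \<or> M = {a,b,c,d}"
  proof (rule ccontr)
    assume nc: "\<not> (card M \<le> 1 \<or> M = {a,b,c,d})"
    have Ms: "M \<subseteq> {a,b,c,d}" using M unfolding smod_def by auto
    then have fM: "finite M" using finite_subset by blast
    obtain x y where xy: "x \<in> M" "y \<in> M" "x \<noteq> y" using two_elems[OF fM] nc by auto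
    have h1: "a \<in> M \<Longrightarrow> c \<in> M \<Longrightarrow> b \<in> M" using smod_in_pos[OF M, of b a c] o by auto
    have h2: "b \<in> M \<Longrightarrow> d \<in> M \<Longrightarrow> c \<in> M" using smod_in_pos[OF M, of c b d] o by auto
    have h3: "a \<in> M \<Longrightarrow> d \<in> M \<Longrightarrow> b \<in> M" using smod_in_pos[OF M, of b a d] o by auto
    have h4: "b \<in> M \<Longrightarrow> a \<in> M \<Longrightarrow> d \<in> M" using smod_in_val[OF M, of d b a] o by auto
    have h5: "d \<in> M \<Longrightarrow> c \<in> M \<Longrightarrow> a \<in> M" using smod_in_val[OF M, of a d c] o by auto
    have h6: "b \<in> M \<Longrightarrow> c \<in> M \<Longrightarrow> d \<in> M" using smod_in_val[OF M, of d b c] o by auto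
    have "a \<in> M \<and> b \<in> M \<and> c \<in> M \<and> d \<in> M"
      using xy Ms h1 h2 h3 h4 h5 h6 by blast
    then have "M = {a,b,c,d}" using Ms by auto
    then show False using nc by auto
  qed
qed

lemma card4: "a < b \<Longrightarrow> b < c \<Longrightarrow> c < (d::nat) \<Longrightarrow> card {a,b,c,d} = 4"
  by auto

definition dsum :: "(nat \<Rightarrow> nat) \<Rightarrow> nat set \<Rightarrow> nat set \<Rightarrow> bool" where
  "dsum p A B \<longleftrightarrow> (\<forall>a\<in>A. \<forall>b\<in>B. a < b \<and> p a < p b)"
definition dskew :: "(nat \<Rightarrow> nat) \<Rightarrow> nat set \<Rightarrow> nat set \<Rightarrow> bool" where
  "dskew p A B \<longleftrightarrow> (\<forall>a\<in>A. \<forall>b\<in>B. a < b \<and> p b < p a)"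
definition decomp :: "(nat \<Rightarrow> nat) \<Rightarrow> nat set \<Rightarrow> bool" where
  "decomp p P \<longleftrightarrow> (\<exists>A B. A \<noteq> {} \<and> B \<noteq> {} \<and> A \<union> B = P \<and> A \<inter> B = {} \<and> (dsum p A B \<or> dskew p A B))"

lemma decompI: "A \<noteq> {} \<Longrightarrow> B \<noteq> {} \<Longrightarrow> A \<union> B = P \<Longrightarrow> A \<inter> B = {} \<Longrightarrow> dsum p A B \<or> dskew p A B \<Longrightarrow> decomp p P"
  unfolding decomp_def by blast

lemma decomp_lemma:
  assumes "finite P" "inj_on p P" "card P \<ge> 2" "\<forall>T\<subseteq>P. card T = 4 \<longrightarrow> \<not> ssimple p T"
  shows "decomp p P"
  using assms
proof (induction "card P" arbitrary: P rule: less_induct)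
  case less
  show ?case
  proof (cases "card P = 2")
    case True
    then obtain x y where P: "P = {x,y}" "x \<noteq> y" by (meson card_2_iff)
    have "p x \<noteq> p y" using less.prems(2) P unfolding inj_on_def by auto
    show ?thesis
    proof (cases "x < y")
      case True
      show ?thesis
        by (rule decompI[of "{x}" "{y}"]) (use P True \<open>p x \<noteq> p y\<close> in \<open>auto simp: dsum_def dskew_def\<close>)
    next
      case False
      then have "y < x" using P by auto
      show ?thesis
        by (rule decompI[of "{y}" "{x}"]) (use P \<open>y < x\<close> \<open>p x \<noteq> p y\<close> in \<open>auto simp: dsum_def dskew_def\<close>)
    qed
  next
    case False
    then have c3: "card P \<ge> 3" using less.prems(3) by auto
    have fin: "finite P" and inj: "inj_on p P" using less.prems by auto
    have ne: "P \<noteq> {}" using c3 by auto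
    have "Max (p ` P) \<in> p ` P" using fin ne by simp
    then obtain t where t: "t \<in> P" "p t = Max (p ` P)" by auto
    have tmax: "\<And>q. q \<in> P \<Longrightarrow> q \<noteq> t \<Longrightarrow> p q < p t"
    proof -
      fix q assume q: "q \<in> P" "q \<noteq> t"
      have "p q \<le> p t" using t q fin by simp
      moreover have "p q \<noteq> p t" using inj q t unfolding inj_on_def by auto
      ultimately show "p q < p t" by simp
    qed
    define P' where "P' = P - {t}"
    have cP': "card P' < card P" "card P' \<ge> 2" using t fin c3 unfolding P'_def by (auto simp: card_Diff_singleton)
    have "decomp p P'"
      using less.hyps[OF cP'(1)] cP'(2) fin inj less.prems(4) unfolding P'_def
      by (meson Diff_subset finite_Diff inj_on_subset order.trans)
    then obtain A B where AB: "A \<noteq> {}" "B \<noteq> {}" "A \<union> B = P'" "A \<inter> B = {}" "dsum p A B \<or> dskew p A B"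
      unfolding decomp_def by blast
    have tA: "t \<notin> A" "t \<notin> B" using AB(3) unfolding P'_def by auto
    have Pt: "P = insert t P'" using t unfolding P'_def by auto
    have ltt: "\<And>q. q \<in> A \<union> B \<Longrightarrow> p q < p t" using tmax AB(3) tA unfolding P'_def by auto
    have no4: "\<And>a b c d. a \<in> P \<Longrightarrow> b \<in> P \<Longrightarrow> c \<in> P \<Longrightarrow> d \<in> P \<Longrightarrow> a < b \<Longrightarrow> b < c \<Longrightarrow> c < d
        \<Longrightarrow> \<not> ssimple p {a,b,c,d}"
      using less.prems(4) card4 by (metis empty_subsetI insert_subset)
    from AB(5) show ?thesis
    proof
      assume ds: "dsum p A B"
      show ?thesis
      proof (cases "\<forall>a\<in>A. a < t")
        case True
        show ?thesis
          by (rule decompI[of A "insert t B"]) (use AB tA True ds ltt Pt in \<open>auto simp: dsum_def\<close>)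
      next
        case False
        then obtain a2 where a2': "a2 \<in> A" "\<not> a2 < t" by auto
        have "a2 \<noteq> t" using a2' tA by auto
        then have a2: "a2 \<in> A" "t < a2" using a2' by (auto simp: not_less le_less)
        show ?thesis
        proof (cases "\<forall>x\<in>P'. t < x")
          case True
          show ?thesis
            by (rule decompI[of "{t}" P']) (use True ltt AB(3) Pt tA AB(1) in \<open>auto simp: dskew_def\<close>)
        next
          case False
          then obtain a1 where a1': "a1 \<in> P'" "\<not> t < a1" by auto
          have "a1 \<noteq> t" using a1' unfolding P'_def by auto
          then have a1: "a1 \<in> P'" "a1 < t" using a1' by (auto simp: not_less le_less)
          have a1A: "a1 \<in> A"
          proof (rule ccontr)
            assume "a1 \<notin> A" then have "a1 \<in> B" using a1 AB(3) by auto
            then have "a2 < a1" using ds a2 unfolding dsum_def by auto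
            then show False using a1 a2 by auto
          qed
          define L where "L = {a\<in>A. a < t}"
          define R where "R = {a\<in>A. t < a}"
          have LR: "\<forall>l\<in>L. \<forall>r\<in>R. p l < p r"
          proof (intro ballI)
            fix l r assume l: "l \<in> L" and r: "r \<in> R"
            show "p l < p r"
            proof (rule ccontr)
              assume "\<not> p l < p r"
              moreover have "l \<noteq> r" using l r unfolding L_def R_def by auto
              moreover have "l \<in> P" "r \<in> P" using l r AB(3) unfolding L_def R_def P'_def by auto
              ultimately have plr: "p r < p l" using inj unfolding inj_on_def by (meson linorder_neqE_nat)
              obtain b where b: "b \<in> B" using AB(2) by auto
              have "r < b" "p l < p b" using ds l r b unfolding dsum_def L_def R_def by auto
              moreover have "p b < p t" using ltt b by auto
              moreover have "b \<in> P" using b AB(3) unfolding P'_def by auto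
              ultimately have "ssimple p {l,t,r,b}"
                using simple4_2413[of l t r b p] l r plr unfolding L_def R_def by auto
              moreover have "l \<in> P" "r \<in> P" using l r AB(3) unfolding L_def R_def P'_def by auto
              ultimately show False using no4[of l t r b] t \<open>b \<in> P\<close> \<open>r < b\<close> l r unfolding L_def R_def by auto
            qed
          qed
          have AL: "A = L \<union> R" using tA unfolding L_def R_def by (auto simp: not_less le_less)
          show ?thesis
          proof (rule decompI[of L "R \<union> B \<union> {t}"])
            show "L \<noteq> {}" using a1 a1A unfolding L_def by auto
            show "L \<union> (R \<union> B \<union> {t}) = P" using AL AB(3) Pt by auto
            show "L \<inter> (R \<union> B \<union> {t}) = {}" using AB(4) unfolding L_def R_def by auto
            show "dsum p L (R \<union> B \<union> {t}) \<or> dskew p L (R \<union> B \<union> {t})"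
              using LR ds ltt unfolding dsum_def L_def R_def by auto
          qed simp
        qed
      qed
    next
      assume ds: "dskew p A B"
      show ?thesis
      proof (cases "\<forall>b\<in>B. t < b")
        case True
        show ?thesis
          by (rule decompI[of "insert t A" B]) (use AB tA True ds ltt Pt in \<open>auto simp: dskew_def\<close>)
      next
        case False
        then obtain b1 where b1': "b1 \<in> B" "\<not> t < b1" by auto
        have "b1 \<noteq> t" using b1' tA by auto
        then have b1: "b1 \<in> B" "b1 < t" using b1' by (auto simp: not_less le_less)
        show ?thesis
        proof (cases "\<forall>x\<in>P'. x < t")
          case True
          show ?thesis
            by (rule decompI[of P' "{t}"]) (use True ltt AB(3) Pt tA AB(1) in \<open>auto simp: dsum_def\<close>)
        next
          case False
          then obtain b2 where b2': "b2 \<in> P'" "\<not> b2 < t" by auto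
          have "b2 \<noteq> t" using b2' unfolding P'_def by auto
          then have b2: "b2 \<in> P'" "t < b2" using b2' by (auto simp: not_less le_less)
          have b2B: "b2 \<in> B"
          proof (rule ccontr)
            assume "b2 \<notin> B" then have "b2 \<in> A" using b2 AB(3) by auto
            then have "b2 < b1" using ds b1 unfolding dskew_def by auto
            then show False using b1 b2 by auto
          qed
          define L where "L = {b\<in>B. b < t}"
          define R where "R = {b\<in>B. t < b}"
          have LR: "\<forall>l\<in>L. \<forall>r\<in>R. p r < p l"
          proof (intro ballI)
            fix l r assume l: "l \<in> L" and r: "r \<in> R"
            show "p r < p l"
            proof (rule ccontr)
              assume "\<not> p r < p l"
              moreover have "l \<noteq> r" using l r unfolding L_def R_def by auto
              moreover have "l \<in> P" "r \<in> P" using l r AB(3) unfolding L_def R_def P'_def by auto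
              ultimately have plr: "p l < p r" using inj unfolding inj_on_def by (meson linorder_neqE_nat)
              obtain a where a: "a \<in> A" using AB(1) by auto
              have "a < l" "p r < p a" using ds l r a unfolding dskew_def L_def R_def by auto
              moreover have "p a < p t" using ltt a by auto
              moreover have "a \<in> P" using a AB(3) unfolding P'_def by auto
              ultimately have "ssimple p {a,l,t,r}"
                using simple4_3142[of a l t r p] l r plr unfolding L_def R_def by auto
              moreover have "l \<in> P" "r \<in> P" using l r AB(3) unfolding L_def R_def P'_def by auto
              ultimately show False using no4[of a l t r] t \<open>a \<in> P\<close> \<open>a < l\<close> l r unfolding L_def R_def by auto
            qed
          qed
          have BL: "B = L \<union> R" using tA unfolding L_def R_def by (auto simp: not_less le_less)
          show ?thesis
          proof (rule decompI[of "A \<union> L \<union> {t}" R])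
            show "R \<noteq> {}" using b2 b2B unfolding R_def by auto
            show "(A \<union> L \<union> {t}) \<union> R = P" using BL AB(3) Pt by auto
            show "(A \<union> L \<union> {t}) \<inter> R = {}" using AB(4) tA unfolding L_def R_def by auto
            show "dsum p (A \<union> L \<union> {t}) R \<or> dskew p (A \<union> L \<union> {t}) R"
              using LR ds ltt unfolding dskew_def L_def R_def by auto
          qed simp
        qed
      qed
    qed
  qed
qed

lemma dsum_smodA: assumes "dsum p A B \<or> dskew p A B" "A \<union> B = S" "A \<inter> B = {}" shows "smod p S A"
  unfolding smod_def
proof (intro conjI ballI)
  fix z assume "z \<in> S - A"
  then have z: "z \<in> B" using assms by auto
  show "\<not> sep p z A"
  proof
    assume "sep p z A"
    then obtain a b where ab: "a \<in> A" "b \<in> A" "(a < z \<and> z < b) \<or> (p a < p z \<and> p z < p b)"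
      unfolding sep_def by blast
    have "b < z" using assms(1) ab z unfolding dsum_def dskew_def by auto
    moreover have "p b < p z \<or> p z < p a" using assms(1) ab z unfolding dsum_def dskew_def by auto
    ultimately show False using ab(3) by auto
  qed
qed (use assms in auto)

lemma dsum_smodB: assumes "dsum p A B \<or> dskew p A B" "A \<union> B = S" "A \<inter> B = {}" shows "smod p S B"
  unfolding smod_def
proof (intro conjI ballI)
  fix z assume "z \<in> S - B"
  then have z: "z \<in> A" using assms by auto
  show "\<not> sep p z B"
  proof
    assume "sep p z B"
    then obtain a b where ab: "a \<in> B" "b \<in> B" "(a < z \<and> z < b) \<or> (p a < p z \<and> p z < p b)"
      unfolding sep_def by blast
    have "z < a" using assms(1) ab z unfolding dsum_def dskew_def by auto
    moreover have "p z < p a \<or> p b < p z" using assms(1) ab z unfolding dsum_def dskew_def by auto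
    ultimately show False using ab(3) by auto
  qed
qed (use assms in auto)

lemma exists_simple4:
  assumes "finite S" "inj_on p S" "ssimple p S" "card S \<ge> 3"
  shows "\<exists>T\<subseteq>S. card T = 4 \<and> ssimple p T"
proof (rule ccontr)
  assume "\<not> ?thesis"
  then have "decomp p S" using decomp_lemma[of S p] assms by auto
  then obtain A B where AB: "A \<noteq> {}" "B \<noteq> {}" "A \<union> B = S" "A \<inter> B = {}" "dsum p A B \<or> dskew p A B"
    unfolding decomp_def by blast
  have mA: "smod p S A" and mB: "smod p S B" using dsum_smodA[OF AB(5,3,4)] dsum_smodB[OF AB(5,3,4)] by auto
  have "A \<noteq> S" "B \<noteq> S" using AB by auto
  then have "card A \<le> 1" "card B \<le> 1" using mA mB assms(3) unfolding ssimple_def by auto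
  moreover have "card A + card B = card S" using AB assms(1)
    by (metis card_Un_disjoint finite_Un)
  ultimately show False using assms(4) by linarith
qed

lemma schmerl_trotter:
  assumes fin: "finite S" and inj: "inj_on p S" and sS: "ssimple p S" and c5: "card S \<ge> 5"
  shows "\<exists>T. T \<subseteq> S \<and> T \<noteq> S \<and> ssimple p T \<and> card T + 2 \<ge> card S"
proof -
  obtain Q where Q: "Q \<subseteq> S" "card Q = 4" "ssimple p Q" using exists_simple4[OF fin inj sS] c5 by auto
  define F where "F = {T. T \<subseteq> S \<and> T \<noteq> S \<and> ssimple p T \<and> card T \<ge> 3}"
  have QF: "Q \<in> F" using Q c5 unfolding F_def by auto
  have finF: "finite F" using fin unfolding F_def by (simp add: finite_subsets_at_top_finite)
  define m where "m = Max (card ` F)"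
  have "m \<in> card ` F" using finF QF unfolding m_def by (intro Max_in) auto
  then obtain T where TF: "T \<in> F" "card T = m" by auto
  have maxT: "\<And>T'. T' \<in> F \<Longrightarrow> card T' \<le> card T" using finF TF unfolding m_def by simp
  have T: "T \<subseteq> S" "T \<noteq> S" "ssimple p T" "card T \<ge> 3" using TF unfolding F_def by auto
  obtain Y where Y: "T \<subset> Y" "Y \<subseteq> S" "card Y \<le> card T + 2" "ssimple p Y"
    using growth[OF fin inj sS T] by blast
  have "Y = S"
  proof (rule ccontr)
    assume "Y \<noteq> S"
    moreover have "card T < card Y" using Y fin by (meson finite_subset psubset_card_mono)
    ultimately have "Y \<in> F" using Y T unfolding F_def by auto
    then show False using maxT \<open>card T < card Y\<close> by fastforce
  qed
  then show ?thesis using T Y by auto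
qed

lemma perm_nth_lt: "is_perm \<pi> \<Longrightarrow> i < length \<pi> \<Longrightarrow> \<pi>!i < length \<pi>"
  unfolding is_perm_def by (metis atLeastLessThan_iff nth_mem)

lemma perm_inj: "is_perm \<pi> \<Longrightarrow> inj_on (nth \<pi>) {..<length \<pi>}"
  unfolding is_perm_def inj_on_def by (simp add: nth_eq_iff_index_eq)

lemma perm_surj: "is_perm \<pi> \<Longrightarrow> v < length \<pi> \<Longrightarrow> \<exists>l<length \<pi>. \<pi>!l = v"
  unfolding is_perm_def by (metis atLeastLessThan_iff in_set_conv_nth zero_le)

lemma perm_rank: assumes "is_perm \<pi>" "i < length \<pi>"
  shows "card {l. l < length \<pi> \<and> \<pi>!l < \<pi>!i} = \<pi>!i"
proof -
  have "bij_betw (nth \<pi>) {l. l < length \<pi> \<and> \<pi>!l < \<pi>!i} {..<\<pi>!i}"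
    unfolding bij_betw_def
  proof
    show "inj_on (nth \<pi>) {l. l < length \<pi> \<and> \<pi> ! l < \<pi> ! i}"
      using perm_inj[OF assms(1)] by (rule inj_on_subset) auto
    show "nth \<pi> ` {l. l < length \<pi> \<and> \<pi> ! l < \<pi> ! i} = {..<\<pi> ! i}"
    proof
      show "nth \<pi> ` {l. l < length \<pi> \<and> \<pi> ! l < \<pi> ! i} \<subseteq> {..<\<pi> ! i}" by auto
      show "{..<\<pi> ! i} \<subseteq> nth \<pi> ` {l. l < length \<pi> \<and> \<pi> ! l < \<pi> ! i}"
      proof
        fix v assume "v \<in> {..<\<pi> ! i}"
        then have "v < length \<pi>" using perm_nth_lt[OF assms] by auto
        then obtain l where "l < length \<pi>" "\<pi>!l = v" using perm_surj[OF assms(1)] by blast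
        then show "v \<in> nth \<pi> ` {l. l < length \<pi> \<and> \<pi> ! l < \<pi> ! i}" using \<open>v \<in> {..<\<pi> ! i}\<close> by auto
      qed
    qed
  qed
  then show ?thesis using bij_betw_same_card by fastforce
qed

lemma interval_smod:
  assumes "is_perm \<pi>" "is_interval \<pi> I"
  shows "smod (nth \<pi>) {..<length \<pi>} I"
proof -
  obtain a b c where I: "I = {a..<b}" "b \<le> length \<pi>" "(\<lambda>i. \<pi>!i) ` I = {c..<c + card I}"
    using assms(2) unfolding is_interval_def by blast
  show ?thesis
    unfolding smod_def
  proof (intro conjI ballI)
    show "I \<subseteq> {..<length \<pi>}" using I by auto
    fix z assume z: "z \<in> {..<length \<pi>} - I"
    show "\<not> sep (nth \<pi>) z I"
    proof
      assume "sep (nth \<pi>) z I"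
      then obtain x y where xy: "x \<in> I" "y \<in> I" "(x < z \<and> z < y) \<or> (\<pi>!x < \<pi>!z \<and> \<pi>!z < \<pi>!y)"
        unfolding sep_def by blast
      from xy(3) show False
      proof
        assume "x < z \<and> z < y" then show False using xy z I by auto
      next
        assume h: "\<pi>!x < \<pi>!z \<and> \<pi>!z < \<pi>!y"
        have "\<pi>!x \<in> {c..<c + card I}" "\<pi>!y \<in> {c..<c + card I}" using xy I(3) by (auto simp del: card_atLeastLessThan)
        then have "\<pi>!z \<in> (\<lambda>i. \<pi>!i) ` I" using h I(3) by auto
        then obtain w where w: "w \<in> I" "\<pi>!w = \<pi>!z" by auto
        then have "w = z" using perm_inj[OF assms(1)] z I unfolding inj_on_def by auto
        then show False using w z by auto
      qed
    qed
  qed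
qed

lemma smod_interval:
  assumes perm: "is_perm \<pi>" and m: "smod (nth \<pi>) {..<length \<pi>} M" and ne: "M \<noteq> {}"
  shows "is_interval \<pi> M"
proof -
  let ?n = "length \<pi>"
  have Ms: "M \<subseteq> {..<?n}" using m unfolding smod_def by auto
  have fM: "finite M" using Ms finite_subset by blast
  have nsep: "\<And>z. z < ?n \<Longrightarrow> z \<notin> M \<Longrightarrow> \<not> sep (nth \<pi>) z M" using m unfolding smod_def by auto
  define a where "a = Min M"
  define b where "b = Suc (Max M)"
  have aM: "a \<in> M" and bM: "Max M \<in> M" using fM ne unfolding a_def by auto
  have Mab: "M = {a..<b}"
  proof
    show "M \<subseteq> {a..<b}" using fM unfolding a_def b_def by (auto simp: less_Suc_eq_le)
    show "{a..<b} \<subseteq> M"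
    proof
      fix x assume x: "x \<in> {a..<b}"
      show "x \<in> M"
      proof (rule ccontr)
        assume xM: "x \<notin> M"
        then have "a < x" "x < Max M" using x aM bM unfolding b_def by (auto simp: le_less less_Suc_eq)
        then have "sep (nth \<pi>) x M" using aM bM unfolding sep_def by blast
        moreover have "x < ?n" using \<open>x < Max M\<close> bM Ms by auto
        ultimately show False using nsep xM by auto
      qed
    qed
  qed
  have bn: "b \<le> ?n" using bM Ms unfolding b_def by auto
  define V where "V = (\<lambda>i. \<pi>!i) ` M"
  have fV: "finite V" "V \<noteq> {}" using fM ne unfolding V_def by auto
  have cV: "card V = card M" unfolding V_def
    using card_image perm_inj[OF perm] Ms inj_on_subset by blast
  have Vint: "V = {Min V..Max V}"
  proof
    show "V \<subseteq> {Min V..Max V}" using fV by auto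
    show "{Min V..Max V} \<subseteq> V"
    proof
      fix v assume v: "v \<in> {Min V..Max V}"
      show "v \<in> V"
      proof (rule ccontr)
        assume vV: "v \<notin> V"
        have mi: "Min V \<in> V" "Max V \<in> V" using fV by auto
        then obtain x y where xy: "x \<in> M" "\<pi>!x = Min V" "y \<in> M" "\<pi>!y = Max V" unfolding V_def by auto
        have "y < ?n" using xy Ms by auto
        then have "Max V < ?n" using perm_nth_lt[OF perm, of y] xy by simp
        then have "v < ?n" using v by auto
        then obtain z where z: "z < ?n" "\<pi>!z = v" using perm_surj[OF perm] by blast
        have zM: "z \<notin> M" using vV z unfolding V_def by auto
        have "Min V < v" "v < Max V" using v vV mi by (auto simp: le_less)
        then have "\<pi>!x < \<pi>!z \<and> \<pi>!z < \<pi>!y" using xy z by simp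
        then have "sep (nth \<pi>) z M" using xy unfolding sep_def by blast
        then show False using nsep z zM by auto
      qed
    qed
  qed
  have "card {Min V..Max V} = card M" using Vint cV by simp
  moreover have "Min V \<le> Max V" using fV by simp
  ultimately have "Max V = Min V + card M - 1" by auto
  moreover have "card M \<ge> 1" using fM ne by (simp add: Suc_leI card_gt_0_iff)
  ultimately have "{Min V..Max V} = {Min V..<Min V + card M}" by auto
  then have "V = {Min V..<Min V + card M}" using Vint by simp
  then show ?thesis unfolding is_interval_def V_def using Mab bn by blast
qed

lemma simple_iff_ssimple:
  assumes "is_perm \<pi>"
  shows "simple \<pi> \<longleftrightarrow> ssimple (nth \<pi>) {..<length \<pi>}"
proof
  assume s: "simple \<pi>"
  show "ssimple (nth \<pi>) {..<length \<pi>}"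
    unfolding ssimple_def
  proof (intro allI impI)
    fix M assume m: "smod (nth \<pi>) {..<length \<pi>} M"
    show "card M \<le> 1 \<or> M = {..<length \<pi>}"
    proof (cases "M = {}")
      case False
      then have "is_interval \<pi> M" using smod_interval[OF assms m] by simp
      then have "card M = 0 \<or> card M = 1 \<or> card M = length \<pi>" using s unfolding simple_def by blast
      moreover have "M \<subseteq> {..<length \<pi>}" using m unfolding smod_def by auto
      ultimately show ?thesis using card_seteq[of "{..<length \<pi>}" M] by auto
    qed simp
  qed
next
  assume s: "ssimple (nth \<pi>) {..<length \<pi>}"
  show "simple \<pi>"
    unfolding simple_def
  proof (intro allI impI)
    fix I assume "is_interval \<pi> I"
    then have "smod (nth \<pi>) {..<length \<pi>} I" using interval_smod[OF assms] by simp
    then have "card I \<le> 1 \<or> I = {..<length \<pi>}" using s unfolding ssimple_def by blast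
    then show "card I = 0 \<or> card I = 1 \<or> card I = length \<pi>" by auto
  qed
qed

definition pat :: "nat list \<Rightarrow> nat list \<Rightarrow> nat list" where
  "pat \<beta> ps = map (\<lambda>q. card {l \<in> set ps. \<beta>!l < \<beta>!q}) ps"

lemma rank_mono: assumes "finite T" "q \<in> T" "q' \<in> T" "v q < (v q' :: nat)"
  shows "card {l\<in>T. v l < v q} < card {l\<in>T. v l < v q'}"
proof (rule psubset_card_mono)
  show "finite {l\<in>T. v l < v q'}" using assms by auto
  show "{l\<in>T. v l < v q} \<subset> {l\<in>T. v l < v q'}" using assms by auto
qed

lemma rank_lt: assumes "finite T" "q \<in> T"
  shows "card {l\<in>T. v l < (v q :: nat)} < card T"
  using assms by (intro psubset_card_mono) auto

lemma sorted_less_iff: "sorted_wrt (<) ps \<Longrightarrow> i < length ps \<Longrightarrow> j < length ps \<Longrightarrow> (ps!i < ps!j \<longleftrightarrow> i < (j::nat))" for ps :: "nat list"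
proof
  assume sw: "sorted_wrt (<) ps" and ij: "i < length ps" "j < length ps"
  show "ps!i < ps!j \<Longrightarrow> i < j"
  proof (rule ccontr)
    assume "ps!i < ps!j" "\<not> i < j"
    then have "j < i \<or> j = i" by auto
    then show False
    proof
      assume "j < i" then have "ps!j < ps!i" using sorted_wrt_nth_less[OF sw] ij by blast
      then show False using \<open>ps!i < ps!j\<close> by simp
    qed (use \<open>ps!i < ps!j\<close> in simp)
  qed
  show "i < j \<Longrightarrow> ps!i < ps!j" using sorted_wrt_nth_less[OF sw] ij by blast
qed

lemma length_pat[simp]: "length (pat \<beta> ps) = length ps"
  unfolding pat_def by simp

lemma nth_pat: "i < length ps \<Longrightarrow> pat \<beta> ps ! i = card {l \<in> set ps. \<beta>!l < \<beta>!(ps!i)}"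
  unfolding pat_def by simp

lemma pat_cmp:
  assumes perm: "is_perm \<beta>" and bd: "\<forall>q\<in>set ps. q < length \<beta>"
    and i: "i < length ps" and j: "j < length ps"
  shows "pat \<beta> ps ! i < pat \<beta> ps ! j \<longleftrightarrow> \<beta>!(ps!i) < \<beta>!(ps!j)"
proof -
  let ?r = "\<lambda>q. card {l \<in> set ps. \<beta>!l < \<beta>!q}"
  have q: "ps!i \<in> set ps" "ps!j \<in> set ps" using i j by auto
  have inj: "inj_on (nth \<beta>) (set ps)" by (intro inj_on_subset[OF perm_inj[OF perm]]) (use bd in auto)
  show ?thesis
  proof
    assume "pat \<beta> ps ! i < pat \<beta> ps ! j"
    then have lt: "?r (ps!i) < ?r (ps!j)" using nth_pat i j by simp
    show "\<beta>!(ps!i) < \<beta>!(ps!j)"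
    proof (rule ccontr)
      assume "\<not> \<beta>!(ps!i) < \<beta>!(ps!j)"
      then have "\<beta>!(ps!j) < \<beta>!(ps!i) \<or> \<beta>!(ps!j) = \<beta>!(ps!i)" by auto
      then show False
      proof
        assume "\<beta>!(ps!j) < \<beta>!(ps!i)"
        then have "?r (ps!j) < ?r (ps!i)" using rank_mono[of "set ps" "ps!j" "ps!i" "nth \<beta>"] q by auto
        then show False using lt by auto
      next
        assume "\<beta>!(ps!j) = \<beta>!(ps!i)"
        then show False using lt by simp
      qed
    qed
  next
    assume "\<beta>!(ps!i) < \<beta>!(ps!j)"
    then have "?r (ps!i) < ?r (ps!j)" using rank_mono[of "set ps" "ps!i" "ps!j" "nth \<beta>"] q by auto
    then show "pat \<beta> ps ! i < pat \<beta> ps ! j" using nth_pat i j by simp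
  qed
qed

lemma pat_perm:
  assumes perm: "is_perm \<beta>" and sw: "sorted_wrt (<) ps" and bd: "\<forall>q\<in>set ps. q < length \<beta>"
  shows "is_perm (pat \<beta> ps)"
proof -
  let ?r = "\<lambda>q. card {l \<in> set ps. \<beta>!l < \<beta>!q}"
  have dps: "distinct ps" using sw strict_sorted_iff by blast
  have inj: "inj_on (nth \<beta>) (set ps)" by (intro inj_on_subset[OF perm_inj[OF perm]]) (use bd in auto)
  have injr: "inj_on ?r (set ps)"
  proof (rule inj_onI)
    fix q q' assume qq: "q \<in> set ps" "q' \<in> set ps" "?r q = ?r q'"
    show "q = q'"
    proof (rule ccontr)
      assume "q \<noteq> q'"
      then have "\<beta>!q \<noteq> \<beta>!q'" using inj qq unfolding inj_on_def by auto
      then have "\<beta>!q < \<beta>!q' \<or> \<beta>!q' < \<beta>!q" by auto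
      then show False using rank_mono[of "set ps" q q' "nth \<beta>"] rank_mono[of "set ps" q' q "nth \<beta>"] qq by auto
    qed
  qed
  have img: "?r ` set ps = {0..<length ps}"
  proof (rule card_seteq)
    show "finite {0..<length ps}" by simp
    show "?r ` set ps \<subseteq> {0..<length ps}"
      using rank_lt[of "set ps" _ "nth \<beta>"] distinct_card[OF dps] by auto
    show "card {0..<length ps} \<le> card (?r ` set ps)"
      using card_image[OF injr] distinct_card[OF dps] by simp
  qed
  show ?thesis unfolding is_perm_def pat_def
    using dps injr img by (simp add: distinct_map)
qed

lemma pat_contains:
  assumes perm: "is_perm \<beta>" and sw: "sorted_wrt (<) ps" and bd: "\<forall>q\<in>set ps. q < length \<beta>"
  shows "contains \<beta> (pat \<beta> ps)"
  unfolding contains_def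
proof (intro exI[of _ "nth ps"] conjI allI impI)
  show "strict_mono_on {..<length (pat \<beta> ps)} (nth ps)"
    unfolding strict_mono_on_def using sw sorted_wrt_nth_less by fastforce
  fix i assume "i < length (pat \<beta> ps)"
  then show "ps!i < length \<beta>" using bd by simp
next
  fix i j assume "i < length (pat \<beta> ps)" "j < length (pat \<beta> ps)"
  then show "(pat \<beta> ps ! i < pat \<beta> ps ! j) = (\<beta> ! (ps ! i) < \<beta> ! (ps ! j))"
    using pat_cmp[OF perm bd] by simp
qed

lemma pat_simple:
  assumes perm: "is_perm \<beta>" and sw: "sorted_wrt (<) ps" and bd: "\<forall>q\<in>set ps. q < length \<beta>"
    and ss: "ssimple (nth \<beta>) (set ps)"
  shows "simple (pat \<beta> ps)"
proof -
  let ?t = "pat \<beta> ps"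
  let ?m = "length ps"
  have dps: "distinct ps" using sw strict_sorted_iff by blast
  have injps: "inj_on (nth ps) {..<?m}" using dps by (simp add: inj_on_def nth_eq_iff_index_eq)
  have "ssimple (nth ?t) {..<length ?t}"
    unfolding ssimple_def
  proof (intro allI impI)
    fix M assume M: "smod (nth ?t) {..<length ?t} M"
    have Ms: "M \<subseteq> {..<?m}" using M unfolding smod_def by auto
    have "smod (nth \<beta>) (set ps) (nth ps ` M)"
      unfolding smod_def
    proof (intro conjI ballI)
      show "nth ps ` M \<subseteq> set ps" using Ms by auto
      fix z assume z: "z \<in> set ps - nth ps ` M"
      then obtain k where k: "k < ?m" "ps!k = z" by (auto simp: in_set_conv_nth)
      have kM: "k \<notin> M" using k z by auto
      show "\<not> sep (nth \<beta>) z (nth ps ` M)"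
      proof
        assume "sep (nth \<beta>) z (nth ps ` M)"
        then obtain i j where ij: "i \<in> M" "j \<in> M"
          "(ps!i < z \<and> z < ps!j) \<or> (\<beta>!(ps!i) < \<beta>!z \<and> \<beta>!z < \<beta>!(ps!j))"
          unfolding sep_def by auto
        have ijm: "i < ?m" "j < ?m" using ij Ms by auto
        have "(i < k \<and> k < j) \<or> (?t!i < ?t!k \<and> ?t!k < ?t!j)"
          using ij(3) k ijm sorted_less_iff[OF sw, of i k] sorted_less_iff[OF sw, of k j]
            pat_cmp[OF perm bd, of i k] pat_cmp[OF perm bd, of k j] by simp
        then have "sep (nth ?t) k M" using ij unfolding sep_def by auto
        then show False using M kM k unfolding smod_def by auto
      qed
    qed
    then have "card (nth ps ` M) \<le> 1 \<or> nth ps ` M = set ps" using ss unfolding ssimple_def by blast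
    moreover have "card (nth ps ` M) = card M" using card_image inj_on_subset[OF injps Ms] by blast
    moreover have "nth ps ` M = set ps \<Longrightarrow> M = {..<?m}"
    proof -
      assume h: "nth ps ` M = set ps"
      have "set ps = nth ps ` {..<?m}" by (auto simp: in_set_conv_nth)
      then show "M = {..<?m}" using h inj_on_image_eq_iff[OF injps Ms] by auto
    qed
    ultimately show "card M \<le> 1 \<or> M = {..<length ?t}" by auto
  qed
  then show ?thesis using simple_iff_ssimple[OF pat_perm[OF perm sw bd]] by simp
qed

lemma contains_trans:
  assumes "contains \<pi> \<sigma>" "contains \<sigma> \<rho>" shows "contains \<pi> \<rho>"
proof -
  obtain f where f: "strict_mono_on {..<length \<sigma>} f" "\<forall>i<length \<sigma>. f i < length \<pi>"
    "\<forall>i<length \<sigma>. \<forall>j<length \<sigma>. \<sigma>!i < \<sigma>!j \<longleftrightarrow> \<pi>!(f i) < \<pi>!(f j)"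
    using assms(1) unfolding contains_def by blast
  obtain g where g: "strict_mono_on {..<length \<rho>} g" "\<forall>i<length \<rho>. g i < length \<sigma>"
    "\<forall>i<length \<rho>. \<forall>j<length \<rho>. \<rho>!i < \<rho>!j \<longleftrightarrow> \<sigma>!(g i) < \<sigma>!(g j)"
    using assms(2) unfolding contains_def by blast
  show ?thesis unfolding contains_def
  proof (intro exI[of _ "f \<circ> g"] conjI allI impI)
    show "strict_mono_on {..<length \<rho>} (f \<circ> g)"
      using f(1) g(1,2) unfolding strict_mono_on_def by auto
    fix i assume "i < length \<rho>" then show "(f \<circ> g) i < length \<pi>" using f g by auto
  next
    fix i j assume "i < length \<rho>" "j < length \<rho>"
    then show "(\<rho> ! i < \<rho> ! j) = (\<pi> ! ((f \<circ> g) i) < \<pi> ! ((f \<circ> g) j))" using f g by auto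
  qed
qed

lemma contains_refl: "contains \<pi> \<pi>"
  unfolding contains_def by (intro exI[of _ id]) (auto simp: strict_mono_on_def)

lemma contains_Nil: "contains \<pi> []"
  unfolding contains_def by (auto simp: strict_mono_on_def)

lemma nth_concat_ex:
  "p < length (concat xs) \<Longrightarrow> \<exists>i j. i < length xs \<and> j < length (xs!i) \<and>
     p = length (concat (take i xs)) + j \<and> concat xs ! p = xs!i!j"
proof (induction xs arbitrary: p)
  case Nil then show ?case by simp
next
  case (Cons x xs)
  show ?case
  proof (cases "p < length x")
    case True
    then show ?thesis by (intro exI[of _ 0] exI[of _ p]) (auto simp: nth_append)
  next
    case False
    then have "p - length x < length (concat xs)" using Cons.prems by auto
    then obtain i j where ij: "i < length xs" "j < length (xs!i)"
      "p - length x = length (concat (take i xs)) + j" "concat xs ! (p - length x) = xs!i!j"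
      using Cons.IH by blast
    show ?thesis
      by (intro exI[of _ "Suc i"] exI[of _ j]) (use ij False in \<open>auto simp: nth_append\<close>)
  qed
qed

lemma len_concat_take_mono: "i \<le> j \<Longrightarrow> length (concat (take i xs)) \<le> length (concat (take j xs))"
proof -
  assume "i \<le> j"
  then have "take j xs = take i xs @ take (j - i) (drop i xs)" by (metis le_add_diff_inverse take_add)
  then show ?thesis by simp
qed

lemma len_concat_take_Suc: "i < length xs \<Longrightarrow>
    length (concat (take (Suc i) xs)) = length (concat (take i xs)) + length (xs!i)"
  by (simp add: take_Suc_conv_app_nth)

definition sh :: "nat list \<Rightarrow> nat list list \<Rightarrow> nat \<Rightarrow> nat" where
  "sh \<sigma> \<alpha>s i = sum_list (map (\<lambda>l. length (\<alpha>s!l)) (filter (\<lambda>l. \<sigma>!l < \<sigma>!i) [0..<length \<sigma>]))"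

definition blocks :: "nat list \<Rightarrow> nat list list \<Rightarrow> nat list list" where
  "blocks \<sigma> \<alpha>s = map (\<lambda>i. map (\<lambda>x. x + sh \<sigma> \<alpha>s i) (\<alpha>s!i)) [0..<length \<sigma>]"

lemma inflate_blocks: "inflate \<sigma> \<alpha>s = concat (blocks \<sigma> \<alpha>s)"
  unfolding inflate_def blocks_def sh_def by simp

definition off :: "nat list \<Rightarrow> nat list list \<Rightarrow> nat \<Rightarrow> nat" where
  "off \<sigma> \<alpha>s i = length (concat (take i (blocks \<sigma> \<alpha>s)))"

lemma sh_sum: "sh \<sigma> \<alpha>s i = (\<Sum>l\<in>{l. l < length \<sigma> \<and> \<sigma>!l < \<sigma>!i}. length (\<alpha>s!l))"
proof -
  have "sh \<sigma> \<alpha>s i = (\<Sum>l\<in>set (filter (\<lambda>l. \<sigma>!l < \<sigma>!i) [0..<length \<sigma>]). length (\<alpha>s!l))"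
    unfolding sh_def by (rule sum_list_distinct_conv_sum_set) simp
  also have "set (filter (\<lambda>l. \<sigma>!l < \<sigma>!i) [0..<length \<sigma>]) = {l. l < length \<sigma> \<and> \<sigma>!l < \<sigma>!i}" by auto
  finally show ?thesis .
qed

lemma sh_lt:
  assumes "i < length \<sigma>" "\<sigma>!i < \<sigma>!i'"
  shows "sh \<sigma> \<alpha>s i + length (\<alpha>s!i) \<le> sh \<sigma> \<alpha>s i'"
proof -
  let ?S = "{l. l < length \<sigma> \<and> \<sigma>!l < \<sigma>!i}"
  let ?S' = "{l. l < length \<sigma> \<and> \<sigma>!l < \<sigma>!i'}"
  have "sh \<sigma> \<alpha>s i + length (\<alpha>s!i) = (\<Sum>l\<in>insert i ?S. length (\<alpha>s!l))"
    using sh_sum[of \<sigma> \<alpha>s i] by (simp add: sum.insert)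
  also have "\<dots> \<le> (\<Sum>l\<in>?S'. length (\<alpha>s!l))"
    by (rule sum_mono2) (use assms in auto)
  finally show ?thesis using sh_sum[of \<sigma> \<alpha>s i'] by simp
qed

lemma length_blocks[simp]: "length (blocks \<sigma> \<alpha>s) = length \<sigma>"
  unfolding blocks_def by simp

lemma infl_pos:
  assumes "p < length (inflate \<sigma> \<alpha>s)"
  shows "\<exists>i j. i < length \<sigma> \<and> j < length (\<alpha>s!i) \<and> p = off \<sigma> \<alpha>s i + j \<and>
     inflate \<sigma> \<alpha>s ! p = \<alpha>s!i!j + sh \<sigma> \<alpha>s i"
proof -
  obtain i j where ij: "i < length (blocks \<sigma> \<alpha>s)" "j < length (blocks \<sigma> \<alpha>s ! i)"
    "p = length (concat (take i (blocks \<sigma> \<alpha>s))) + j" "concat (blocks \<sigma> \<alpha>s) ! p = blocks \<sigma> \<alpha>s!i!j"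
    using nth_concat_ex[of p "blocks \<sigma> \<alpha>s"] assms unfolding inflate_blocks by blast
  show ?thesis
    by (intro exI[of _ i] exI[of _ j]) (use ij in \<open>auto simp: blocks_def off_def inflate_blocks\<close>)
qed

lemma off_mono:
  assumes "i < i'" "i' \<le> length \<sigma>"
  shows "off \<sigma> \<alpha>s i + length (\<alpha>s!i) \<le> off \<sigma> \<alpha>s i'"
proof -
  have "off \<sigma> \<alpha>s (Suc i) = off \<sigma> \<alpha>s i + length (\<alpha>s!i)"
    using len_concat_take_Suc[of i "blocks \<sigma> \<alpha>s"] assms unfolding off_def by (simp add: blocks_def)
  moreover have "off \<sigma> \<alpha>s (Suc i) \<le> off \<sigma> \<alpha>s i'" unfolding off_def
    by (rule len_concat_take_mono) (use assms in simp)
  ultimately show ?thesis by simp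
qed

lemma inflate_simple_sub:
  assumes \<sigma>: "is_perm \<sigma>" and len: "length \<alpha>s = length \<sigma>" and \<alpha>s: "\<forall>\<alpha>\<in>set \<alpha>s. is_perm \<alpha>"
    and \<tau>: "is_perm \<tau>" and s\<tau>: "simple \<tau>" and c: "contains (inflate \<sigma> \<alpha>s) \<tau>"
  shows "contains \<sigma> \<tau> \<or> (\<exists>\<alpha>\<in>set \<alpha>s. contains \<alpha> \<tau>)"
proof -
  let ?I = "inflate \<sigma> \<alpha>s"
  let ?n = "length \<tau>"
  let ?m = "length \<sigma>"
  obtain f where f: "strict_mono_on {..<?n} f" "\<forall>i<?n. f i < length ?I"
    "\<forall>i<?n. \<forall>j<?n. \<tau>!i < \<tau>!j \<longleftrightarrow> ?I!(f i) < ?I!(f j)"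
    using c unfolding contains_def by blast
  have fmono: "\<And>k k'. k < ?n \<Longrightarrow> k' < ?n \<Longrightarrow> k < k' \<Longrightarrow> f k < f k'"
    using f(1) unfolding strict_mono_on_def by auto
  have "\<forall>k. \<exists>ij. k < ?n \<longrightarrow> (fst ij < ?m \<and> snd ij < length (\<alpha>s!(fst ij)) \<and> f k = off \<sigma> \<alpha>s (fst ij) + snd ij \<and>
     ?I ! (f k) = \<alpha>s!(fst ij)!(snd ij) + sh \<sigma> \<alpha>s (fst ij))"
  proof
    fix k
    show "\<exists>ij. k < ?n \<longrightarrow> (fst ij < ?m \<and> snd ij < length (\<alpha>s!(fst ij)) \<and> f k = off \<sigma> \<alpha>s (fst ij) + snd ij \<and>
     ?I ! (f k) = \<alpha>s!(fst ij)!(snd ij) + sh \<sigma> \<alpha>s (fst ij))"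
    proof (cases "k < ?n")
      case True
      then obtain i j where "i < ?m \<and> j < length (\<alpha>s!i) \<and> f k = off \<sigma> \<alpha>s i + j \<and>
        ?I ! (f k) = \<alpha>s!i!j + sh \<sigma> \<alpha>s i" using infl_pos[of "f k" \<sigma> \<alpha>s] f(2) by blast
      then show ?thesis by (metis fst_conv snd_conv)
    qed simp
  qed
  then obtain g where g0: "\<forall>k. k < ?n \<longrightarrow> (fst (g k) < ?m \<and> snd (g k) < length (\<alpha>s!(fst (g k))) \<and>
      f k = off \<sigma> \<alpha>s (fst (g k)) + snd (g k) \<and> ?I ! (f k) = \<alpha>s!(fst (g k))!(snd (g k)) + sh \<sigma> \<alpha>s (fst (g k)))"
    by (rule choice[THEN exE])
  have g: "\<And>k. k < ?n \<Longrightarrow> fst (g k) < ?m \<and> snd (g k) < length (\<alpha>s!(fst (g k))) \<and>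
      f k = off \<sigma> \<alpha>s (fst (g k)) + snd (g k) \<and> ?I ! (f k) = \<alpha>s!(fst (g k))!(snd (g k)) + sh \<sigma> \<alpha>s (fst (g k))"
    using g0 by blast
  define B where "B = (\<lambda>k. fst (g k))"
  define Of where "Of = (\<lambda>k. snd (g k))"
  have Bm: "\<And>k. k < ?n \<Longrightarrow> B k < ?m" using g unfolding B_def by blast
  have Ol: "\<And>k. k < ?n \<Longrightarrow> Of k < length (\<alpha>s!(B k))" using g unfolding B_def Of_def by blast
  have fB: "\<And>k. k < ?n \<Longrightarrow> f k = off \<sigma> \<alpha>s (B k) + Of k" using g unfolding B_def Of_def by blast
  have IB: "\<And>k. k < ?n \<Longrightarrow> ?I ! (f k) = \<alpha>s!(B k)!(Of k) + sh \<sigma> \<alpha>s (B k)"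
    using g unfolding B_def Of_def by blast
  have aval: "\<And>k. k < ?n \<Longrightarrow> \<alpha>s!(B k)!(Of k) < length (\<alpha>s!(B k))"
  proof -
    fix k assume k: "k < ?n"
    have "\<alpha>s!(B k) \<in> set \<alpha>s" using Bm[OF k] len by simp
    then show "\<alpha>s!(B k)!(Of k) < length (\<alpha>s!(B k))" using perm_nth_lt \<alpha>s Ol[OF k] by blast
  qed
  have posB: "\<And>k k'. k < ?n \<Longrightarrow> k' < ?n \<Longrightarrow> f k < f k' \<Longrightarrow> B k \<le> B k'"
  proof (rule ccontr)
    fix k k' assume kk: "k < ?n" "k' < ?n" "f k < f k'" "\<not> B k \<le> B k'"
    then have "off \<sigma> \<alpha>s (B k') + length (\<alpha>s!(B k')) \<le> off \<sigma> \<alpha>s (B k)"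
      using off_mono[of "B k'" "B k" \<sigma> \<alpha>s] Bm[OF kk(1)] kk(4) by simp
    then show False using fB[OF kk(1)] fB[OF kk(2)] Ol[OF kk(2)] kk(3) by linarith
  qed
  have valB: "\<And>k k'. k < ?n \<Longrightarrow> k' < ?n \<Longrightarrow> B k \<noteq> B k' \<Longrightarrow>
      (?I!(f k) < ?I!(f k') \<longleftrightarrow> \<sigma>!(B k) < \<sigma>!(B k'))"
  proof -
    fix k k' assume kk: "k < ?n" "k' < ?n" "B k \<noteq> B k'"
    have "\<sigma>!(B k) \<noteq> \<sigma>!(B k')" using inj_on_contraD[OF perm_inj[OF \<sigma>] kk(3)] Bm[OF kk(1)] Bm[OF kk(2)] by auto
    then have "\<sigma>!(B k) < \<sigma>!(B k') \<or> \<sigma>!(B k') < \<sigma>!(B k)" by auto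
    then show "?I!(f k) < ?I!(f k') \<longleftrightarrow> \<sigma>!(B k) < \<sigma>!(B k')"
    proof
      assume lt: "\<sigma>!(B k) < \<sigma>!(B k')"
      have "sh \<sigma> \<alpha>s (B k) + length (\<alpha>s!(B k)) \<le> sh \<sigma> \<alpha>s (B k')" using sh_lt[OF Bm[OF kk(1)] lt] .
      then have "?I!(f k) < ?I!(f k')" using IB[OF kk(1)] IB[OF kk(2)] aval[OF kk(1)] by linarith
      then show ?thesis using lt by simp
    next
      assume lt: "\<sigma>!(B k') < \<sigma>!(B k)"
      have "sh \<sigma> \<alpha>s (B k') + length (\<alpha>s!(B k')) \<le> sh \<sigma> \<alpha>s (B k)" using sh_lt[OF Bm[OF kk(2)] lt] .
      then have "?I!(f k') < ?I!(f k)" using IB[OF kk(1)] IB[OF kk(2)] aval[OF kk(2)] by linarith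
      then show ?thesis using lt by simp
    qed
  qed
  show ?thesis
  proof (cases "?n = 0")
    case True
    then have "\<tau> = []" by simp
    then show ?thesis using contains_Nil by simp
  next
    case False
    then have n0: "0 < ?n" by simp
    show ?thesis
    proof (cases "\<forall>k<?n. B k = B 0")
      case True
      have "contains (\<alpha>s!(B 0)) \<tau>"
        unfolding contains_def
      proof (intro exI[of _ Of] conjI allI impI)
        show "strict_mono_on {..<?n} Of"
        proof (rule strict_mono_onI)
          fix k k' assume kk: "k \<in> {..<?n}" "k' \<in> {..<?n}" "k < k'"
          then have "f k < f k'" using fmono by auto
          moreover have "B k = B 0" "B k' = B 0" using True kk by auto
          ultimately show "Of k < Of k'" using fB[of k] fB[of k'] kk by auto
        qed
        fix k assume k: "k < ?n"
        then have "B k = B 0" using True by blast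
        then show "Of k < length (\<alpha>s!(B 0))" using Ol[OF k] by simp
      next
        fix k k' assume kk: "k < ?n" "k' < ?n"
        moreover have "B k = B 0" "B k' = B 0" using True kk by auto
        ultimately show "(\<tau>!k < \<tau>!k') = (\<alpha>s!(B 0)!(Of k) < \<alpha>s!(B 0)!(Of k'))"
          using f(3) IB[OF kk(1)] IB[OF kk(2)] by auto
      qed
      moreover have "\<alpha>s!(B 0) \<in> set \<alpha>s" using Bm[OF n0] len by simp
      ultimately show ?thesis by blast
    next
      case False
      then obtain k1 where k1: "k1 < ?n" "B k1 \<noteq> B 0" by blast
      have ss: "ssimple (nth \<tau>) {..<?n}" using simple_iff_ssimple[OF \<tau>] s\<tau> by simp
      have modK: "\<And>i. smod (nth \<tau>) {..<?n} {k. k < ?n \<and> B k = i}"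
      proof -
        fix i
        show "smod (nth \<tau>) {..<?n} {k. k < ?n \<and> B k = i}"
          unfolding smod_def
        proof (intro conjI ballI)
          fix z assume z: "z \<in> {..<?n} - {k. k < ?n \<and> B k = i}"
          then have zn: "z < ?n" "B z \<noteq> i" by auto
          show "\<not> sep (nth \<tau>) z {k. k < ?n \<and> B k = i}"
          proof
            assume "sep (nth \<tau>) z {k. k < ?n \<and> B k = i}"
            then obtain x y where xy: "x < ?n" "B x = i" "y < ?n" "B y = i"
              "(x < z \<and> z < y) \<or> (\<tau>!x < \<tau>!z \<and> \<tau>!z < \<tau>!y)" unfolding sep_def by auto
            from xy(5) show False
            proof
              assume "x < z \<and> z < y"
              then have "f x < f z" "f z < f y" using fmono xy zn by auto
              then have "B x \<le> B z" "B z \<le> B y" using posB[of x z] posB[of z y] xy(1,3) zn(1) by auto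
              then show False using xy zn by auto
            next
              assume h: "\<tau>!x < \<tau>!z \<and> \<tau>!z < \<tau>!y"
              then have "?I!(f x) < ?I!(f z)" "?I!(f z) < ?I!(f y)" using f(3) xy zn by auto
              then have "\<sigma>!(B x) < \<sigma>!(B z)" "\<sigma>!(B z) < \<sigma>!(B y)"
                using valB[of x z] valB[of z y] xy zn by auto
              then show False using xy by auto
            qed
          qed
        qed auto
      qed
      have injB: "\<And>k k'. k < ?n \<Longrightarrow> k' < ?n \<Longrightarrow> B k = B k' \<Longrightarrow> k = k'"
      proof -
        fix k k' assume kk: "k < ?n" "k' < ?n" "B k = B k'"
        let ?K = "{j. j < ?n \<and> B j = B k}"
        have "card ?K \<le> 1 \<or> ?K = {..<?n}" using ss modK unfolding ssimple_def by blast
        moreover have "?K \<noteq> {..<?n}"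
        proof
          assume "?K = {..<?n}"
          then have "B 0 = B k" "B k1 = B k" using n0 k1 by auto
          then show False using k1 by simp
        qed
        ultimately have "card ?K \<le> Suc 0" by simp
        moreover have "finite ?K" by simp
        ultimately have "\<forall>a\<in>?K. \<forall>b\<in>?K. a = b" using card_le_Suc0_iff_eq by blast
        then show "k = k'" using kk by auto
      qed
      have "contains \<sigma> \<tau>"
        unfolding contains_def
      proof (intro exI[of _ B] conjI allI impI)
        show "strict_mono_on {..<?n} B"
        proof (rule strict_mono_onI)
          fix k k' assume kk: "k \<in> {..<?n}" "k' \<in> {..<?n}" "k < k'"
          then have "f k < f k'" using fmono by auto
          then have "B k \<le> B k'" using posB[of k k'] kk by auto
          moreover have "B k \<noteq> B k'" using injB[of k k'] kk by auto
          ultimately show "B k < B k'" by simp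
        qed
        fix k assume "k < ?n" then show "B k < ?m" using Bm by simp
      next
        fix k k' assume kk: "k < ?n" "k' < ?n"
        show "(\<tau>!k < \<tau>!k') = (\<sigma>!(B k) < \<sigma>!(B k'))"
        proof (cases "k = k'")
          case False
          then have "B k \<noteq> B k'" using injB kk by blast
          then show ?thesis using valB[OF kk] f(3) kk by auto
        qed simp
      qed
      then show ?thesis by simp
    qed
  qed
qed

lemma decomp_eq:
  assumes perm: "is_perm \<beta>" and ab: "a < b" "b \<le> length \<beta>" "2 \<le> b - a"
    and img: "(\<lambda>i. \<beta>!i) ` {a..<b} = {c..<c + (b - a)}"
  defines "ps \<equiv> [0..<Suc a] @ [b..<length \<beta>]"
  defines "m \<equiv> Suc a + (length \<beta> - b)"
  defines "\<sigma> \<equiv> pat \<beta> ps"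
  defines "\<alpha> \<equiv> pat \<beta> [a..<b]"
  defines "\<alpha>s \<equiv> map (\<lambda>i. if i = a then \<alpha> else [0]) [0..<m]"
  shows "inflate \<sigma> \<alpha>s = \<beta>"
proof -
  let ?n = "length \<beta>"
  have lenps: "length ps = m" unfolding ps_def m_def using ab by simp
  have lens: "length \<sigma> = m" unfolding \<sigma>_def using lenps by simp
  have lena: "length \<alpha> = b - a" unfolding \<alpha>_def by simp
  have am: "a < m" unfolding m_def by simp
  have psn: "\<And>i. i < m \<Longrightarrow> ps!i = (if i \<le> a then i else b + i - Suc a)"
    unfolding ps_def m_def using ab by (auto simp: nth_append)
  have setps: "set ps = {0..<Suc a} \<union> {b..<?n}" unfolding ps_def by auto
  have sw: "sorted_wrt (<) ps" unfolding ps_def using ab by (auto simp: sorted_wrt_append)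
  have bd: "\<forall>q\<in>set ps. q < ?n" using setps ab by auto
  have sw2: "sorted_wrt (<) [a..<b]" by simp
  have bd2: "\<forall>q\<in>set [a..<b]. q < ?n" using ab by auto
  have sperm: "is_perm \<sigma>" unfolding \<sigma>_def using pat_perm[OF perm sw bd] .
  have psa: "ps!a = a" using psn am by simp
  have aslen: "\<And>l. l < m \<Longrightarrow> length (\<alpha>s!l) = (if l = a then b - a else 1)"
    unfolding \<alpha>s_def using lena by simp
  have inI: "\<And>q. q \<in> {a..<b} \<Longrightarrow> \<beta>!q \<in> {c..<c + (b - a)}" using img by blast
  have outI: "\<And>q. q < ?n \<Longrightarrow> q \<notin> {a..<b} \<Longrightarrow> \<beta>!q \<notin> {c..<c + (b - a)}"
  proof
    fix q assume q: "q < ?n" "q \<notin> {a..<b}" "\<beta>!q \<in> {c..<c + (b - a)}"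
    then obtain w where w: "w \<in> {a..<b}" "\<beta>!w = \<beta>!q" using img by (metis imageE)
    then have "w = q" using perm_inj[OF perm] q ab unfolding inj_on_def by auto
    then show False using w q by auto
  qed
  have side: "\<And>q x y. \<beta>!q \<notin> {c..<c + (b - a)} \<Longrightarrow> \<beta>!x \<in> {c..<c + (b - a)} \<Longrightarrow> \<beta>!y \<in> {c..<c + (b - a)}
      \<Longrightarrow> (\<beta>!q < \<beta>!x \<longleftrightarrow> \<beta>!q < \<beta>!y) \<and> (\<beta>!x < \<beta>!q \<longleftrightarrow> \<beta>!y < \<beta>!q)"
    by auto
  have rankb: "\<And>x. x < ?n \<Longrightarrow> \<beta>!x = card {q. q < ?n \<and> \<beta>!q < \<beta>!x}"
    using perm_rank[OF perm] by simp
  have shsum: "\<And>i. i < m \<Longrightarrow> sh \<sigma> \<alpha>s i = card {l. l < m \<and> \<sigma>!l < \<sigma>!i} + (if \<sigma>!a < \<sigma>!i then b - a - 1 else 0)"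
  proof -
    fix i assume i: "i < m"
    let ?L = "{l. l < m \<and> \<sigma>!l < \<sigma>!i}"
    have "sh \<sigma> \<alpha>s i = (\<Sum>l\<in>?L. length (\<alpha>s!l))" using sh_sum[of \<sigma> \<alpha>s i] lens by simp
    also have "\<dots> = (\<Sum>l\<in>?L. 1 + (if l = a then b - a - 1 else 0))"
      by (rule sum.cong) (use aslen ab in auto)
    also have "\<dots> = (\<Sum>l\<in>?L. 1) + (\<Sum>l\<in>?L. if l = a then b - a - 1 else 0)"
      by (rule sum.distrib)
    also have "\<dots> = card ?L + (if a \<in> ?L then b - a - 1 else 0)"
    proof -
      have finL: "finite ?L" by simp
      show ?thesis using sum.delta[OF finL, of a "\<lambda>_. b - a - 1"] by simp
    qed
    also have "(a \<in> ?L) = (\<sigma>!a < \<sigma>!i)" using am by auto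
    finally show "sh \<sigma> \<alpha>s i = card ?L + (if \<sigma>!a < \<sigma>!i then b - a - 1 else 0)" .
  qed
  have sh_i: "\<And>i. i < m \<Longrightarrow> sh \<sigma> \<alpha>s i = \<sigma>!i + (if \<sigma>!a < \<sigma>!i then b - a - 1 else 0)"
    using shsum perm_rank[OF sperm] lens by simp
  have V1: "\<And>i. i < m \<Longrightarrow> i \<noteq> a \<Longrightarrow> sh \<sigma> \<alpha>s i = \<beta>!(ps!i)"
  proof -
    fix i assume i: "i < m" "i \<noteq> a"
    define x where "x = ps!i"
    have xn: "x < ?n" using bd i lenps unfolding x_def by auto
    have xI: "x \<notin> {a..<b}" using psn[OF i(1)] i ab unfolding x_def by auto
    have bx: "\<beta>!x \<notin> {c..<c + (b - a)}" using outI xn xI by blast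
    have ba: "\<beta>!a \<in> {c..<c + (b - a)}" using inI ab by auto
    have split: "{q. q < ?n \<and> \<beta>!q < \<beta>!x} = {q\<in>set ps. \<beta>!q < \<beta>!x} \<union> {q\<in>{Suc a..<b}. \<beta>!q < \<beta>!x}"
      using setps ab by auto
    have disj: "{q\<in>set ps. \<beta>!q < \<beta>!x} \<inter> {q\<in>{Suc a..<b}. \<beta>!q < \<beta>!x} = {}" using setps by auto
    have c2: "card {q\<in>{Suc a..<b}. \<beta>!q < \<beta>!x} = (if \<beta>!a < \<beta>!x then b - a - 1 else 0)"
    proof (cases "\<beta>!a < \<beta>!x")
      case True
      have "\<And>q. q \<in> {Suc a..<b} \<Longrightarrow> \<beta>!q < \<beta>!x"
      proof -
        fix q assume "q \<in> {Suc a..<b}"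
        then have "\<beta>!q \<in> {c..<c + (b - a)}" using inI by auto
        then show "\<beta>!q < \<beta>!x" using True bx ba by auto
      qed
      then have "{q\<in>{Suc a..<b}. \<beta>!q < \<beta>!x} = {Suc a..<b}" by auto
      then show ?thesis using True by simp
    next
      case False
      have "{q\<in>{Suc a..<b}. \<beta>!q < \<beta>!x} = {}"
      proof -
        have "\<And>q. q \<in> {Suc a..<b} \<Longrightarrow> \<not> \<beta>!q < \<beta>!x"
        proof -
          fix q assume "q \<in> {Suc a..<b}"
          then have "\<beta>!q \<in> {c..<c + (b - a)}" using inI by auto
          then show "\<not> \<beta>!q < \<beta>!x" using False bx ba by auto
        qed
        then show ?thesis by auto
      qed
      then show ?thesis using False by simp
    qed
    have "\<beta>!x = card {q\<in>set ps. \<beta>!q < \<beta>!x} + card {q\<in>{Suc a..<b}. \<beta>!q < \<beta>!x}"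
      using rankb[OF xn] split disj card_Un_disjoint[of "{q\<in>set ps. \<beta>!q < \<beta>!x}" "{q\<in>{Suc a..<b}. \<beta>!q < \<beta>!x}"]
      by simp
    moreover have "\<sigma>!i = card {q\<in>set ps. \<beta>!q < \<beta>!x}" unfolding \<sigma>_def x_def using nth_pat i lenps by simp
    moreover have "(\<sigma>!a < \<sigma>!i) = (\<beta>!a < \<beta>!x)"
      unfolding \<sigma>_def x_def using pat_cmp[OF perm bd, of a i] am i lenps psa by simp
    ultimately show "sh \<sigma> \<alpha>s i = \<beta>!(ps!i)" using sh_i[OF i(1)] c2 unfolding x_def by simp
  qed
  have V2: "\<And>j. j < b - a \<Longrightarrow> \<alpha>!j + sh \<sigma> \<alpha>s a = \<beta>!(a + j)"
  proof -
    fix j assume j: "j < b - a"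
    define y where "y = a + j"
    have yI: "y \<in> {a..<b}" using j unfolding y_def by auto
    have yn: "y < ?n" using yI ab by auto
    have by': "\<beta>!y \<in> {c..<c + (b - a)}" using inI yI by blast
    have ba: "\<beta>!a \<in> {c..<c + (b - a)}" using inI ab by auto
    have split: "{q. q < ?n \<and> \<beta>!q < \<beta>!y} = {q\<in>{a..<b}. \<beta>!q < \<beta>!y} \<union> {q\<in>set ps - {a}. \<beta>!q < \<beta>!y}"
      using setps ab by auto
    have disj: "{q\<in>{a..<b}. \<beta>!q < \<beta>!y} \<inter> {q\<in>set ps - {a}. \<beta>!q < \<beta>!y} = {}" using setps by auto
    have e2: "{q\<in>set ps - {a}. \<beta>!q < \<beta>!y} = {q\<in>set ps. \<beta>!q < \<beta>!a}"
    proof -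
      have "\<And>q. q \<in> set ps - {a} \<Longrightarrow> (\<beta>!q < \<beta>!y \<longleftrightarrow> \<beta>!q < \<beta>!a)"
      proof -
        fix q assume q: "q \<in> set ps - {a}"
        then have "q < ?n" "q \<notin> {a..<b}" using setps bd by auto
        then have "\<beta>!q \<notin> {c..<c + (b - a)}" using outI by blast
        then show "\<beta>!q < \<beta>!y \<longleftrightarrow> \<beta>!q < \<beta>!a" using side[of q y a] by' ba by blast
      qed
      then show ?thesis by auto
    qed
    have "\<beta>!y = card {q\<in>{a..<b}. \<beta>!q < \<beta>!y} + card {q\<in>set ps - {a}. \<beta>!q < \<beta>!y}"
      using rankb[OF yn] split disj card_Un_disjoint[of "{q\<in>{a..<b}. \<beta>!q < \<beta>!y}" "{q\<in>set ps - {a}. \<beta>!q < \<beta>!y}"]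
      by simp
    moreover have "\<alpha>!j = card {q\<in>{a..<b}. \<beta>!q < \<beta>!y}" unfolding \<alpha>_def y_def using nth_pat[of j "[a..<b]" \<beta>] j by simp
    moreover have "sh \<sigma> \<alpha>s a = card {q\<in>set ps. \<beta>!q < \<beta>!a}"
      using sh_i[OF am] nth_pat[of a ps \<beta>] am lenps psa unfolding \<sigma>_def by simp
    ultimately show "\<alpha>!j + sh \<sigma> \<alpha>s a = \<beta>!(a + j)" using e2 unfolding y_def by simp
  qed
  have upt: "[0..<m] = [0..<a] @ a # [Suc a..<m]"
    using am by (metis upt_add_eq_append upt_conv_Cons le0 le_add_diff_inverse less_imp_le_nat)
  have blk: "blocks \<sigma> \<alpha>s = map (\<lambda>i. [sh \<sigma> \<alpha>s i]) [0..<a] @ map (\<lambda>x. x + sh \<sigma> \<alpha>s a) \<alpha> # map (\<lambda>i. [sh \<sigma> \<alpha>s i]) [Suc a..<m]"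
    unfolding blocks_def lens upt using am unfolding \<alpha>s_def by (auto simp: nth_append)
  have eq: "inflate \<sigma> \<alpha>s = map (sh \<sigma> \<alpha>s) [0..<a] @ map (\<lambda>x. x + sh \<sigma> \<alpha>s a) \<alpha> @ map (sh \<sigma> \<alpha>s) [Suc a..<m]"
    unfolding inflate_blocks blk by simp
  show ?thesis
    unfolding eq
  proof (rule nth_equalityI)
    show "length (map (sh \<sigma> \<alpha>s) [0..<a] @ map (\<lambda>x. x + sh \<sigma> \<alpha>s a) \<alpha> @ map (sh \<sigma> \<alpha>s) [Suc a..<m]) = length \<beta>"
    proof -
      have "length (map (sh \<sigma> \<alpha>s) [0..<a] @ map (\<lambda>x. x + sh \<sigma> \<alpha>s a) \<alpha> @ map (sh \<sigma> \<alpha>s) [Suc a..<m])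
          = a + (b - a) + (m - Suc a)" using lena by simp
      also have "\<dots> = length \<beta>" using ab unfolding m_def by arith
      finally show ?thesis .
    qed
    fix k assume "k < length (map (sh \<sigma> \<alpha>s) [0..<a] @ map (\<lambda>x. x + sh \<sigma> \<alpha>s a) \<alpha> @ map (sh \<sigma> \<alpha>s) [Suc a..<m])"
    then have "k < a + (b - a) + (m - Suc a)" using lena by simp
    then have k: "k < ?n" using ab unfolding m_def by arith
    show "(map (sh \<sigma> \<alpha>s) [0..<a] @ map (\<lambda>x. x + sh \<sigma> \<alpha>s a) \<alpha> @ map (sh \<sigma> \<alpha>s) [Suc a..<m]) ! k = \<beta>!k"
    proof (cases "k < a")
      case True
      then show ?thesis using V1[of k] psn[of k] am by (simp add: nth_append)
    next
      case False
      show ?thesis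
      proof (cases "k < b")
        case True
        then have "(map (sh \<sigma> \<alpha>s) [0..<a] @ map (\<lambda>x. x + sh \<sigma> \<alpha>s a) \<alpha> @ map (sh \<sigma> \<alpha>s) [Suc a..<m]) ! k
            = \<alpha>!(k - a) + sh \<sigma> \<alpha>s a"
        proof -
          have "k - a < length \<alpha>" using True False lena by arith
          then show ?thesis using False by (simp add: nth_append)
        qed
        also have "\<dots> = \<beta>!k" using V2[of "k - a"] True False by simp
        finally show ?thesis .
      next
        case False2: False
        define i where "i = Suc a + (k - b)"
        have i: "i < m" "i \<noteq> a" "\<not> i \<le> a" using k False2 ab unfolding i_def m_def by auto
        let ?A = "map (sh \<sigma> \<alpha>s) [0..<a]"
        let ?B = "map (\<lambda>x. x + sh \<sigma> \<alpha>s a) \<alpha>"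
        let ?C = "map (sh \<sigma> \<alpha>s) [Suc a..<m]"
        have lA: "length ?A = a" and lB: "length ?B = b - a" using lena by auto
        have "(?A @ ?B @ ?C) ! k = (?B @ ?C) ! (k - a)" using False lA by (simp add: nth_append)
        also have "\<dots> = ?C ! (k - a - (b - a))"
        proof -
          have "\<not> k - a < length ?B" using lB False2 by arith
          then show ?thesis by (simp add: nth_append lB lena)
        qed
        also have "k - a - (b - a) = k - b" using False2 ab by arith
        also have "k - b < m - Suc a" using k False2 ab unfolding m_def by arith
        then have "?C ! (k - b) = sh \<sigma> \<alpha>s i" unfolding i_def by simp
        finally have "(?A @ ?B @ ?C) ! k = sh \<sigma> \<alpha>s i" .
        then have "(map (sh \<sigma> \<alpha>s) [0..<a] @ map (\<lambda>x. x + sh \<sigma> \<alpha>s a) \<alpha> @ map (sh \<sigma> \<alpha>s) [Suc a..<m]) ! k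
            = sh \<sigma> \<alpha>s i" by simp
        also have "\<dots> = \<beta>!(ps!i)" using V1 i by simp
        also have "ps!i = k" using psn[OF i(1)] i False2 unfolding i_def by simp
        finally show ?thesis .
      qed
    qed
  qed
qed

lemma contains_single: "length \<pi> \<ge> 1 \<Longrightarrow> contains \<pi> [0]"
  unfolding contains_def by (intro exI[of _ "\<lambda>_. 0"]) (auto simp: strict_mono_on_def)

lemma perm_single: "is_perm [0]"
  unfolding is_perm_def by auto

lemma perm_classD: "perm_class D \<Longrightarrow> \<pi> \<in> D \<Longrightarrow> is_perm \<sigma> \<Longrightarrow> contains \<pi> \<sigma> \<Longrightarrow> \<sigma> \<in> D"
  unfolding perm_class_def by blast

lemma perm_classP: "perm_class D \<Longrightarrow> \<pi> \<in> D \<Longrightarrow> is_perm \<pi>"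
  unfolding perm_class_def by blast

theorem mainTheorem7:
  fixes C :: "nat list set" and k :: nat
  assumes "perm_class C"
    and "finite {\<sigma>\<in>C. simple \<sigma>}"
    and "\<exists>\<sigma>\<in>C. simple \<sigma> \<and> length \<sigma> = k"
    and "\<forall>\<sigma>\<in>C. simple \<sigma> \<longrightarrow> length \<sigma> \<le> k"
  shows "\<forall>\<beta>\<in>basis (subst_closure C). length \<beta> \<le> k + 2"
proof
  fix \<beta> assume \<beta>B: "\<beta> \<in> basis (subst_closure C)"
  define Fam where "Fam = {D. perm_class D \<and> subst_closed D \<and> C \<subseteq> D}"
  have Cl: "subst_closure C = \<Inter>Fam" unfolding subst_closure_def Fam_def by simp
  show "length \<beta> \<le> k + 2"
  proof (cases "Fam = {}")
    case True
    have "\<beta> \<notin> subst_closure C" using \<beta>B unfolding basis_def by blast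
    then show ?thesis using Cl True by simp
  next
    case False
    then obtain E where E: "E \<in> Fam" by auto
    have Eprops: "perm_class E" "subst_closed E" "C \<subseteq> E" using E unfolding Fam_def by auto
    have clP: "perm_class (\<Inter>Fam)"
      unfolding perm_class_def
    proof (intro conjI ballI allI impI)
      fix \<pi> assume "\<pi> \<in> \<Inter>Fam" then have "\<pi> \<in> E" using E by auto
      then show "is_perm \<pi>" using perm_classP[OF Eprops(1)] by blast
    next
      fix \<pi> \<sigma> assume h: "\<pi> \<in> \<Inter>Fam" "is_perm \<sigma> \<and> contains \<pi> \<sigma>"
      show "\<sigma> \<in> \<Inter>Fam"
      proof
        fix D assume "D \<in> Fam" then have "perm_class D" "\<pi> \<in> D" using h unfolding Fam_def by auto
        then show "\<sigma> \<in> D" using h perm_classD by blast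
      qed
    qed
    have clS: "subst_closed (\<Inter>Fam)"
      unfolding subst_closed_def
    proof (intro ballI allI impI)
      fix \<sigma> \<alpha>s assume h: "\<sigma> \<in> \<Inter>Fam" "length \<alpha>s = length \<sigma> \<and> (\<forall>\<alpha>\<in>set \<alpha>s. \<alpha> \<in> \<Inter>Fam \<and> \<alpha> \<noteq> [])"
      show "inflate \<sigma> \<alpha>s \<in> \<Inter>Fam"
      proof
        fix D assume D: "D \<in> Fam"
        then have "subst_closed D" "\<sigma> \<in> D" "\<forall>\<alpha>\<in>set \<alpha>s. \<alpha> \<in> D \<and> \<alpha> \<noteq> []" using h unfolding Fam_def by auto
        then show "inflate \<sigma> \<alpha>s \<in> D" using h unfolding subst_closed_def by auto
      qed
    qed
    define D' where "D' = {\<pi>\<in>E. \<forall>\<tau>. is_perm \<tau> \<and> contains \<pi> \<tau> \<and> simple \<tau> \<longrightarrow> \<tau> \<in> C}"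
    have D'Fam: "D' \<in> Fam"
      unfolding Fam_def
    proof (intro CollectI conjI)
      show "perm_class D'"
        unfolding perm_class_def
      proof (intro conjI ballI allI impI)
        fix \<pi> assume "\<pi> \<in> D'" then have "\<pi> \<in> E" unfolding D'_def by blast
        then show "is_perm \<pi>" using perm_classP[OF Eprops(1)] by blast
      next
        fix \<pi> \<sigma> assume h: "\<pi> \<in> D'" "is_perm \<sigma> \<and> contains \<pi> \<sigma>"
        have "\<pi> \<in> E" using h unfolding D'_def by blast
        then have "\<sigma> \<in> E" using h perm_classD[OF Eprops(1)] by blast
        moreover have "\<forall>\<tau>. is_perm \<tau> \<and> contains \<sigma> \<tau> \<and> simple \<tau> \<longrightarrow> \<tau> \<in> C"
          using h contains_trans unfolding D'_def by blast
        ultimately show "\<sigma> \<in> D'" unfolding D'_def by auto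
      qed
      show "subst_closed D'"
        unfolding subst_closed_def
      proof (intro ballI allI impI)
        fix \<sigma> \<alpha>s assume h: "\<sigma> \<in> D'" "length \<alpha>s = length \<sigma> \<and> (\<forall>\<alpha>\<in>set \<alpha>s. \<alpha> \<in> D' \<and> \<alpha> \<noteq> [])"
        have inE: "\<sigma> \<in> E" "\<forall>\<alpha>\<in>set \<alpha>s. \<alpha> \<in> E \<and> \<alpha> \<noteq> []" using h unfolding D'_def by auto
        then have "inflate \<sigma> \<alpha>s \<in> E" using Eprops(2) h unfolding subst_closed_def by blast
        moreover have "\<forall>\<tau>. is_perm \<tau> \<and> contains (inflate \<sigma> \<alpha>s) \<tau> \<and> simple \<tau> \<longrightarrow> \<tau> \<in> C"
        proof (intro allI impI)
          fix \<tau> assume t: "is_perm \<tau> \<and> contains (inflate \<sigma> \<alpha>s) \<tau> \<and> simple \<tau>"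
          have ps: "is_perm \<sigma>" "\<forall>\<alpha>\<in>set \<alpha>s. is_perm \<alpha>" using inE perm_classP[OF Eprops(1)] by auto
          have "contains \<sigma> \<tau> \<or> (\<exists>\<alpha>\<in>set \<alpha>s. contains \<alpha> \<tau>)"
            using inflate_simple_sub[OF ps(1) _ ps(2)] h t by blast
          then show "\<tau> \<in> C" using h t unfolding D'_def by blast
        qed
        ultimately show "inflate \<sigma> \<alpha>s \<in> D'" unfolding D'_def by auto
      qed
      show "C \<subseteq> D'"
      proof
        fix \<pi> assume "\<pi> \<in> C"
        moreover have "\<forall>\<tau>. is_perm \<tau> \<and> contains \<pi> \<tau> \<and> simple \<tau> \<longrightarrow> \<tau> \<in> C"
          using perm_classD[OF assms(1) \<open>\<pi> \<in> C\<close>] by blast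
        ultimately show "\<pi> \<in> D'" using Eprops(3) unfolding D'_def by blast
      qed
    qed
    have ClD': "subst_closure C \<subseteq> D'" using Cl D'Fam by auto
    have bprops: "is_perm \<beta>" "\<beta> \<notin> subst_closure C"
      "\<And>\<sigma>. is_perm \<sigma> \<Longrightarrow> contains \<beta> \<sigma> \<Longrightarrow> \<sigma> \<noteq> \<beta> \<Longrightarrow> \<sigma> \<in> subst_closure C"
      using \<beta>B unfolding basis_def by auto
    let ?n = "length \<beta>"
    show ?thesis
    proof (rule ccontr)
      assume "\<not> ?thesis"
      then have nk: "?n \<ge> k + 3" by simp
      show False
      proof (cases "simple \<beta>")
        case True
        have sS: "ssimple (nth \<beta>) {..<?n}" using simple_iff_ssimple[OF bprops(1)] True by simp
        obtain T where T: "T \<subseteq> {..<?n}" "card T < ?n" "card T \<ge> k + 1" "ssimple (nth \<beta>) T"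
        proof (cases "k \<le> 1")
          case True
          have "{0,1} \<subseteq> {..<?n}" "card {0::nat,1} < ?n" "card {0::nat,1} \<ge> k + 1" "ssimple (nth \<beta>) {0,1}"
            using nk True ssimple_small[of "{0::nat,1}"] by auto
          then show ?thesis using that by blast
        next
          case False
          then have "card {..<?n} \<ge> 5" using nk by simp
          then obtain T where "T \<subseteq> {..<?n}" "T \<noteq> {..<?n}" "ssimple (nth \<beta>) T" "card T + 2 \<ge> card {..<?n}"
            using schmerl_trotter[OF _ perm_inj[OF bprops(1)] sS] by auto
          moreover have "card T < ?n"
          proof (rule ccontr)
            assume "\<not> card T < ?n"
            then have "card {..<?n} \<le> card T" by simp
            then have "T = {..<?n}" using card_seteq[OF finite_lessThan calculation(1)] by blast
            then show False using calculation(2) by simp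
          qed
          ultimately show ?thesis using that nk by auto
        qed
        have finT: "finite T" using T(1) finite_subset by blast
        define ps where "ps = sorted_list_of_set T"
        have sw: "sorted_wrt (<) ps" unfolding ps_def using strict_sorted_list_of_set[of T] by simp
        have setps: "set ps = T" unfolding ps_def using finT by simp
        have lenps: "length ps = card T" unfolding ps_def by simp
        have bd: "\<forall>q\<in>set ps. q < ?n" using setps T(1) by auto
        define \<tau> where "\<tau> = pat \<beta> ps"
        have tp: "is_perm \<tau>" unfolding \<tau>_def using pat_perm[OF bprops(1) sw bd] .
        have tc: "contains \<beta> \<tau>" unfolding \<tau>_def using pat_contains[OF bprops(1) sw bd] .
        have ts: "simple \<tau>" unfolding \<tau>_def using pat_simple[OF bprops(1) sw bd] T(4) setps by simp
        have tl: "length \<tau> = card T" unfolding \<tau>_def using lenps by simp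
        then have "\<tau> \<noteq> \<beta>" using T(2) by auto
        then have "\<tau> \<in> subst_closure C" using bprops(3) tp tc by blast
        then have "\<tau> \<in> D'" using ClD' by auto
        then have "\<tau> \<in> C" using tp ts contains_refl unfolding D'_def by blast
        then have "length \<tau> \<le> k" using assms(4) ts by blast
        then show False using tl T(3) by simp
      next
        case False
        then obtain I where I: "is_interval \<beta> I" "card I \<noteq> 0" "card I \<noteq> 1" "card I \<noteq> ?n"
          unfolding simple_def by blast
        then obtain a b c where abc: "I = {a..<b}" "b \<le> ?n" "(\<lambda>i. \<beta>!i) ` I = {c..<c + card I}"
          unfolding is_interval_def by blast
        have cI: "card I = b - a" using abc by simp
        have ab: "a < b" "2 \<le> b - a" "b - a < ?n" using I cI abc(2) by auto
        have img: "(\<lambda>i. \<beta>!i) ` {a..<b} = {c..<c + (b - a)}" using abc cI by simp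
        define ps where "ps = [0..<Suc a] @ [b..<?n]"
        define m where "m = Suc a + (?n - b)"
        define \<sigma> where "\<sigma> = pat \<beta> ps"
        define \<alpha> where "\<alpha> = pat \<beta> [a..<b]"
        define \<alpha>s where "\<alpha>s = map (\<lambda>i. if i = a then \<alpha> else [0]) [0..<m]"
        have infl: "inflate \<sigma> \<alpha>s = \<beta>"
          using decomp_eq[OF bprops(1) ab(1) abc(2) ab(2) img] unfolding \<sigma>_def \<alpha>s_def \<alpha>_def ps_def m_def by simp
        have sw: "sorted_wrt (<) ps" unfolding ps_def using ab by (auto simp: sorted_wrt_append)
        have bd: "\<forall>q\<in>set ps. q < ?n" unfolding ps_def using ab abc(2) by auto
        have sw2: "sorted_wrt (<) [a..<b]" by simp
        have bd2: "\<forall>q\<in>set [a..<b]. q < ?n" using abc(2) by auto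
        have lens: "length \<sigma> = m" unfolding \<sigma>_def ps_def m_def using abc(2) ab by simp
        have lena: "length \<alpha> = b - a" unfolding \<alpha>_def by simp
        have "m < ?n" unfolding m_def using ab abc(2) by arith
        then have sb: "\<sigma> \<noteq> \<beta>" using lens by auto
        have sperm: "is_perm \<sigma>" unfolding \<sigma>_def using pat_perm[OF bprops(1) sw bd] .
        have scont: "contains \<beta> \<sigma>" unfolding \<sigma>_def using pat_contains[OF bprops(1) sw bd] .
        have sCl: "\<sigma> \<in> subst_closure C" using bprops(3)[OF sperm scont sb] .
        have ab': "\<alpha> \<noteq> \<beta>" using lena ab by auto
        have aperm: "is_perm \<alpha>" unfolding \<alpha>_def using pat_perm[OF bprops(1) sw2 bd2] .
        have acont: "contains \<beta> \<alpha>" unfolding \<alpha>_def using pat_contains[OF bprops(1) sw2 bd2] .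
        have aCl: "\<alpha> \<in> subst_closure C" using bprops(3)[OF aperm acont ab'] .
        have oneCl: "[0] \<in> subst_closure C"
        proof -
          have "m \<ge> 1" unfolding m_def by simp
          then have c0: "contains \<sigma> [0]" using contains_single[of \<sigma>] lens by simp
          have "\<sigma> \<in> \<Inter>Fam" using sCl Cl by simp
          then have "[0] \<in> \<Inter>Fam" by (rule perm_classD[OF clP _ perm_single c0])
          then show ?thesis using Cl by simp
        qed
        have "\<forall>x\<in>set \<alpha>s. x \<in> subst_closure C \<and> x \<noteq> []"
        proof
          fix x assume "x \<in> set \<alpha>s"
          then have "x = \<alpha> \<or> x = [0]" unfolding \<alpha>s_def by (auto split: if_splits)
          moreover have "\<alpha> \<noteq> []" using lena ab by auto
          ultimately show "x \<in> subst_closure C \<and> x \<noteq> []" using aCl oneCl by auto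
        qed
        moreover have "length \<alpha>s = length \<sigma>" unfolding \<alpha>s_def using lens by simp
        moreover have "subst_closed (subst_closure C)" using clS Cl by simp
        ultimately have "inflate \<sigma> \<alpha>s \<in> subst_closure C" using sCl unfolding subst_closed_def by blast
        then show False using infl bprops(2) by simp
      qed
    qed
  qed
qed

end
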